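(* Let $\Sigma\in\mathbb{R}^{d\times d}$ be symmetric positive definite with $(\Sigma^{-1})_{ii}=1$ for all $i=1,\dots,d$, and let $\kappa=\lambda_{\max}(\Sigma)/\lambda_{\min}(\Sigma)$. Then $$\mathbb{E}_R\Big[\inf_{q\in\mathcal{P}_{\mathrm{prod}}}\mathrm{KL}\big(q\,\|\,\mathcal{N}(0,R\Sigma R^\top)\big)\Big]\le\Big(1-\frac{2}{(d+2)\kappa^2}\Big)\,\mathrm{KL}\big(\mathcal{N}(0,I_d)\,\|\,\mathcal{N}(0,\Sigma)\big),$$ where the expectation is over $R$ drawn from the uniform (Haar) distribution on the orthogonal group $O(d)$.
   Context: $\mathcal{P}_{\mathrm{prod}}$ is the set of product probability measures on $\mathbb{R}^d$ with positive continuously differentiable densities. $\mathrm{KL}(q\|p)=\mathbb{E}_q[\log(q/p)]$. The hypothesis $(\Sigma^{-1})_{ii}=1$ is equivalent to $\mathcal{N}(0,I_d)$ being the optimal product (mean-field) approximation of $\mathcal{N}(0,\Sigma)$ in reverse KL. *)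

theory Defs
  imports "HOL-Probability.Probability"
begin

definition sym_pos_def :: "real^'n^'n \<Rightarrow> bool" where
  "sym_pos_def S \<longleftrightarrow> transpose S = S \<and> (\<forall>x. x \<noteq> 0 \<longrightarrow> x \<bullet> (S *v x) > 0)"

definition mat_eigenvalues :: "real^'n^'n \<Rightarrow> real set" where
  "mat_eigenvalues A = {l. \<exists>v. v \<noteq> 0 \<and> A *v v = l *\<^sub>R v}"

definition cond_number :: "real^'n^'n \<Rightarrow> real" where
  "cond_number A = Max (mat_eigenvalues A) / Min (mat_eigenvalues A)"

definition gauss_density :: "real^'n^'n \<Rightarrow> real^'n \<Rightarrow> real" where
  "gauss_density S x =
     exp (- (x \<bullet> (matrix_inv S *v x)) / 2) / sqrt ((2 * pi) ^ CARD('n) * det S)"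

definition KL_dens :: "('a::euclidean_space \<Rightarrow> real) \<Rightarrow> ('a \<Rightarrow> real) \<Rightarrow> ereal" where
  "KL_dens q p =
     enn2ereal (\<integral>\<^sup>+ x. ennreal (q x * ln (q x / p x)) \<partial>lborel)
   - enn2ereal (\<integral>\<^sup>+ x. ennreal (- (q x * ln (q x / p x))) \<partial>lborel)"

definition prod_densities :: "(real^'n \<Rightarrow> real) set" where
  "prod_densities = {q. \<exists>g :: 'n \<Rightarrow> real \<Rightarrow> real.
      (\<forall>i. (\<forall>t. g i t > 0) \<and> g i C1_differentiable_on UNIV \<and>
           g i \<in> borel_measurable borel \<and> (\<integral>\<^sup>+ t. ennreal (g i t) \<partial>lborel) = 1) \<and>
      (\<forall>x. q x = (\<Prod>i\<in>UNIV. g i (x $ i)))}"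

text \<open>Haar (uniform) probability measure on the orthogonal group O(d), viewed as a
  Borel probability measure on d x d matrices concentrated on O(d) and invariant under
  left multiplication by orthogonal matrices (this characterises it uniquely).\<close>
definition haar_orthogonal :: "(real^'n^'n) measure \<Rightarrow> bool" where
  "haar_orthogonal M \<longleftrightarrow> prob_space M \<and> sets M = sets borel \<and>
     measure M {R. orthogonal_matrix R} = 1 \<and>
     (\<forall>Q. orthogonal_matrix Q \<longrightarrow> distr M M (\<lambda>R. Q ** R) = M)"

end

theory Submission
  imports Defs
begin


lemma matrix_inv_eq:
  fixes A B :: "real^'n^'n"
  assumes "A ** B = mat 1"
  shows "matrix_inv A = B"
proof -
  have BA: "B ** A = mat 1" using assms matrix_left_right_inverse by blast
  have "A ** matrix_inv A = mat 1 \<and> matrix_inv A ** A = mat 1"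
    unfolding matrix_inv_def by (rule someI[of _ B]) (use assms BA in blast)
  then show ?thesis
    by (metis assms matrix_mul_assoc matrix_mul_lid matrix_mul_rid)
qed

lemma sym_inner_swap:
  fixes A :: "real^'n^'n"
  assumes "transpose A = A"
  shows "(A *v x) \<bullet> y = x \<bullet> (A *v y)"
proof -
  have "(A *v x) \<bullet> y = (x v* A) \<bullet> y"
    by (metis assms vector_transpose_matrix)
  also have "\<dots> = x \<bullet> (A *v y)" by (rule dot_lmul_matrix)
  finally show ?thesis .
qed

lemma quad_scale:
  fixes A :: "real^'n^'n"
  shows "(c *\<^sub>R x) \<bullet> (A *v (c *\<^sub>R x)) = c^2 * (x \<bullet> (A *v x))"
  by (simp add: matrix_vector_mult_scaleR power2_eq_square)

lemma quad_add:
  fixes A :: "real^'n^'n"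
  assumes "transpose A = A"
  shows "(v + t *\<^sub>R w) \<bullet> (A *v (v + t *\<^sub>R w)) =
     v \<bullet> (A *v v) + 2 * t * ((A *v v) \<bullet> w) + t^2 * (w \<bullet> (A *v w))"
proof -
  have s: "w \<bullet> (A *v v) = (A *v v) \<bullet> w" by (simp add: inner_commute)
  have s2: "v \<bullet> (A *v w) = (A *v v) \<bullet> w" using sym_inner_swap[OF assms, of v w] by simp
  show ?thesis
    by (simp add: matrix_vector_right_distrib matrix_vector_mult_scaleR inner_add_left
        inner_add_right s s2 power2_eq_square algebra_simps)
qed

lemma aux_div_sq: "(k::real) \<noteq> 0 \<Longrightarrow> (a/k)^2 * c * k^2 = a^2 * c"
  by (simp add: power_divide)

lemma max_eigen_step:
  fixes A :: "real^'n^'n"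
  assumes sym: "transpose A = A"
    and W: "W = {x. \<forall>b\<in>B. x \<bullet> b = 0}"
    and inv: "\<And>x. x \<in> W \<Longrightarrow> A *v x \<in> W"
    and ne: "x0 \<in> W" "x0 \<noteq> 0"
    and fin: "finite B"
  shows "\<exists>v\<in>W. norm v = 1 \<and> A *v v = (v \<bullet> (A *v v)) *\<^sub>R v"
proof -
  define S where "S = W \<inter> sphere 0 1"
  have clW: "closed W" unfolding W
  proof -
    have "{x. \<forall>b\<in>B. x \<bullet> b = 0} = (\<Inter>b\<in>B. {x. b \<bullet> x = 0})"
      by (auto simp: inner_commute)
    then show "closed {x. \<forall>b\<in>B. x \<bullet> b = 0}"
      by (simp add: closed_INT closed_hyperplane)
  qed
  have cS: "compact S" unfolding S_def
    using clW by (simp add: compact_Int_closed closed_Int_compact)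
  have x0S: "(1 / norm x0) *\<^sub>R x0 \<in> S"
    using ne unfolding S_def W by (auto simp: inner_scaleR_left)
  have cont: "continuous_on S (\<lambda>x. x \<bullet> (A *v x))"
    by (intro continuous_intros linear_continuous_on matrix_vector_mul_bounded_linear)
  obtain v where vS: "v \<in> S" and vmax: "\<And>y. y \<in> S \<Longrightarrow> y \<bullet> (A *v y) \<le> v \<bullet> (A *v v)"
    using continuous_attains_sup[OF cS _ cont] x0S by blast
  define M where "M = v \<bullet> (A *v v)"
  have vW: "v \<in> W" and vn: "norm v = 1" using vS by (auto simp: S_def)
  have Wsub: "a *\<^sub>R x + b *\<^sub>R y \<in> W" if "x \<in> W" "y \<in> W" for a b x y
    using that unfolding W by (auto simp: inner_add_left inner_scaleR_left)
  have bound: "x \<bullet> (A *v x) \<le> M * (norm x)^2" if "x \<in> W" for x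
  proof (cases "x = 0")
    case True then show ?thesis by simp
  next
    case False
    have "(1 / norm x) *\<^sub>R x \<in> S"
      using that False Wsub[of x x "1/norm x" 0] unfolding S_def by auto
    then have "((1 / norm x) *\<^sub>R x) \<bullet> (A *v ((1 / norm x) *\<^sub>R x)) \<le> M"
      using vmax M_def by blast
    then have "(1/norm x)^2 * (x \<bullet> (A *v x)) \<le> M" by (simp only: quad_scale)
    then have "(1/norm x)^2 * (x \<bullet> (A *v x)) * (norm x)^2 \<le> M * (norm x)^2"
      by (simp add: mult_right_mono)
    then show ?thesis using False by (simp add: power2_eq_square field_simps)
  qed
  have orth: "(A *v v) \<bullet> w = 0" if wW: "w \<in> W" and wv: "w \<bullet> v = 0" for w
  proof -
    define a where "a = (A *v v) \<bullet> w"
    define c where "c = \<bar>M * (norm w)^2 - w \<bullet> (A *v w)\<bar>"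
    have key: "2 * t * a \<le> t^2 * c" for t
    proof -
      have "v + t *\<^sub>R w \<in> W" using Wsub[OF vW wW, of 1 t] by simp
      then have b: "(v + t *\<^sub>R w) \<bullet> (A *v (v + t *\<^sub>R w)) \<le> M * (norm (v + t *\<^sub>R w))^2"
        by (rule bound)
      have n: "(norm (v + t *\<^sub>R w))^2 = 1 + t^2 * (norm w)^2"
      proof -
        have vv: "v \<bullet> v = 1" using vn by (simp add: norm_eq_1)
        have wv': "v \<bullet> w = 0" using wv by (simp add: inner_commute)
        show ?thesis
          by (simp only: power2_norm_eq_inner)
            (simp add: inner_add_left inner_add_right vv wv wv' algebra_simps power2_eq_square)
      qed
      from b n have "M + 2 * t * a + t^2 * (w \<bullet> (A *v w)) \<le> M * (1 + t^2 * (norm w)^2)"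
        by (simp add: quad_add[OF sym] a_def M_def)
      then have "2 * t * a \<le> t^2 * (M * (norm w)^2 - w \<bullet> (A *v w))"
        by (simp add: algebra_simps)
      also have "\<dots> \<le> t^2 * c" unfolding c_def
        by (intro mult_left_mono) auto
      finally show ?thesis .
    qed
    have c0: "c \<ge> 0" by (simp add: c_def)
    have cp: "c + 1 \<noteq> 0" using c0 by simp
    have e1: "2 * (a/(c+1)) * a * (c+1)^2 = 2*a^2*(c+1)"
      using cp by (simp add: field_simps power2_eq_square)
    have e2: "(a/(c+1))^2 * c * (c+1)^2 = a^2*c"
      using cp aux_div_sq by blast
    have "2 * (a/(c+1)) * a * (c+1)^2 \<le> (a/(c+1))^2 * c * (c+1)^2"
      using key[of "a / (c+1)"] by (intro mult_right_mono) auto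
    then have "2 * a^2 * (c+1) \<le> a^2 * c" using e1 e2 by simp
    then have "a^2 * (c + 2) \<le> 0" by (simp add: algebra_simps)
    moreover have "0 \<le> a^2 * (c+2)" using c0 by (intro mult_nonneg_nonneg) auto
    ultimately have "a^2 * (c+2) = 0" by linarith
    then have "a = 0" using c0 by simp
    then show ?thesis unfolding a_def by simp
  qed
  define z where "z = A *v v - M *\<^sub>R v"
  have zW: "z \<in> W" unfolding z_def using Wsub[OF inv[OF vW] vW, of 1 "-M"] by simp
  have zv: "z \<bullet> v = 0" unfolding z_def M_def using vn
    by (simp add: inner_diff_left inner_diff_right inner_commute norm_eq_1)
  have "z \<bullet> z = (A *v v) \<bullet> z - M * (v \<bullet> z)"
    unfolding z_def by (simp add: inner_diff_left)
  also have "\<dots> = 0" using orth[OF zW zv] zv by (simp add: inner_commute)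
  finally have "z = 0" by simp
  then show ?thesis using vW vn unfolding z_def M_def by auto
qed

lemma sym_eigenbasis:
  fixes A :: "real^'n^'n"
  assumes sym: "transpose A = A"
  shows "k \<le> CARD('n) \<Longrightarrow> \<exists>B. finite B \<and> card B = k \<and>
     (\<forall>b\<in>B. norm b = 1 \<and> A *v b = (b \<bullet> (A *v b)) *\<^sub>R b) \<and> pairwise orthogonal B"
proof (induction k)
  case 0
  show ?case by (rule exI[of _ "{}"]) auto
next
  case (Suc k)
  then obtain B where fB: "finite B" and cB: "card B = k"
    and eB: "\<forall>b\<in>B. norm b = 1 \<and> A *v b = (b \<bullet> (A *v b)) *\<^sub>R b"
    and oB: "pairwise orthogonal B" by auto
  have "0 \<notin> B" using eB by force
  then have "independent B" using oB pairwise_orthogonal_independent by blast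
  then have "dim B = k" using cB dim_eq_card_independent by blast
  then have "dim B < DIM(real^'n)" using Suc.prems by simp
  then obtain x0 where x0: "x0 \<noteq> 0" "\<And>y. y \<in> span B \<Longrightarrow> orthogonal x0 y"
    using orthogonal_to_subspace_exists by blast
  define W where "W = {x. \<forall>b\<in>B. x \<bullet> b = 0}"
  have x0W: "x0 \<in> W" unfolding W_def using x0(2) span_base orthogonal_def by blast
  have inv: "A *v x \<in> W" if "x \<in> W" for x
  proof -
    have "(A *v x) \<bullet> b = 0" if "b \<in> B" for b
    proof -
      have "(A *v x) \<bullet> b = x \<bullet> (A *v b)" by (rule sym_inner_swap[OF sym])
      also have "\<dots> = (b \<bullet> (A *v b)) * (x \<bullet> b)" using eB that by (metis inner_scaleR_right)
      also have "\<dots> = 0" using \<open>x \<in> W\<close> that unfolding W_def by simp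
      finally show ?thesis .
    qed
    then show ?thesis unfolding W_def by blast
  qed
  obtain v where vW: "v \<in> W" and vn: "norm v = 1" and ve: "A *v v = (v \<bullet> (A *v v)) *\<^sub>R v"
    using max_eigen_step[OF sym W_def inv x0W x0(1) fB] by blast
  have vB: "v \<notin> B"
  proof
    assume "v \<in> B"
    then have "v \<bullet> v = 0" using vW unfolding W_def by blast
    then show False using vn by (simp add: norm_eq_1)
  qed
  show ?case
  proof (intro exI[of _ "insert v B"] conjI)
    show "finite (insert v B)" using fB by simp
    show "card (insert v B) = Suc k" using fB vB cB by simp
    show "\<forall>b\<in>insert v B. norm b = 1 \<and> A *v b = (b \<bullet> (A *v b)) *\<^sub>R b"
      using eB vn ve by auto
    show "pairwise orthogonal (insert v B)"
      using oB vW unfolding W_def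
      by (auto simp: pairwise_insert orthogonal_def inner_commute)
  qed
qed

definition dmat :: "('n \<Rightarrow> real) \<Rightarrow> real^'n^'n" where
  "dmat l = (\<chi> i j. if i = j then l i else 0)"

lemma spectral:
  fixes A :: "real^'n^'n"
  assumes sym: "transpose A = A"
  shows "\<exists>P l. orthogonal_matrix P \<and> A = P ** dmat l ** transpose P"
proof -
  obtain B where fB: "finite B" and cB: "card B = CARD('n)"
    and eB: "\<forall>b\<in>B. norm b = 1 \<and> A *v b = (b \<bullet> (A *v b)) *\<^sub>R b"
    and oB: "pairwise orthogonal B"
    using sym_eigenbasis[OF sym, of "CARD('n)"] by auto
  obtain e where be: "bij_betw e (UNIV::'n set) B"
    using finite_same_card_bij[of "UNIV::'n set" B] fB cB by auto
  have eB': "e j \<in> B" for j using be bij_betwE by blast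
  have inj: "e j = e k \<Longrightarrow> j = k" for j k using be by (auto simp: bij_betw_def inj_on_def)
  define P :: "real^'n^'n" where "P = (\<chi> i j. e j $ i)"
  define l where "l j = e j \<bullet> (A *v e j)" for j
  have ee: "e j \<bullet> e k = (if j = k then 1 else 0)" for j k
  proof (cases "j = k")
    case True then show ?thesis using eB eB'[of j] by (simp add: norm_eq_1)
  next
    case False
    then have "e j \<noteq> e k" using inj by blast
    then show ?thesis using False oB eB'[of j] eB'[of k]
      by (auto simp: pairwise_def orthogonal_def)
  qed
  have oP: "orthogonal_matrix P"
    unfolding orthogonal_matrix
  proof (simp add: vec_eq_iff, intro allI)
    fix j k
    have "(transpose P ** P) $ j $ k = (\<Sum>i\<in>UNIV. e j $ i * e k $ i)"
      by (simp add: matrix_matrix_mult_def transpose_def P_def)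
    also have "\<dots> = e j \<bullet> e k" by (simp add: inner_vec_def)
    finally show "(transpose P ** P) $ j $ k = mat 1 $ j $ k"
      by (simp add: ee mat_def)
  qed
  have AP: "A ** P = P ** dmat l"
  proof (simp add: vec_eq_iff, intro allI)
    fix i j
    have "(A ** P) $ i $ j = (A *v e j) $ i"
      by (simp add: matrix_matrix_mult_def matrix_vector_mult_def P_def)
    also have "\<dots> = l j * e j $ i"
    proof -
      have "A *v e j = l j *\<^sub>R e j" using eB eB'[of j] unfolding l_def by blast
      then show ?thesis by simp
    qed
    also have "\<dots> = (P ** dmat l) $ i $ j"
      by (simp add: matrix_matrix_mult_def dmat_def P_def if_distrib cong: if_cong)
    finally show "(A ** P) $ i $ j = (P ** dmat l) $ i $ j" .
  qed
  have PPt: "P ** transpose P = mat 1" using oP orthogonal_matrix_def by blast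
  have "A = A ** (P ** transpose P)" by (simp add: PPt)
  also have "\<dots> = P ** dmat l ** transpose P" by (simp add: matrix_mul_assoc AP)
  finally show ?thesis using oP by blast
qed

lemma dmat_mult: "dmat a ** dmat b = dmat (\<lambda>i. a i * b i)"
proof -
  have "(\<Sum>k\<in>UNIV. (if i = k then a i else 0) * (if k = j then b k else 0)) =
      (if i = j then a i * b i else 0)" for i j
  proof -
    have "(\<Sum>k\<in>UNIV. (if i = k then a i else 0) * (if k = j then b k else 0)) =
       (\<Sum>k\<in>UNIV. (if k = i then a i * (if i = j then b i else 0) else 0))"
      by (intro sum.cong) auto
    then show ?thesis by simp
  qed
  then show ?thesis by (simp add: vec_eq_iff matrix_matrix_mult_def dmat_def)
qed

lemma dmat_one: "dmat (\<lambda>_. 1) = mat 1"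
  by (simp add: vec_eq_iff dmat_def mat_def)

lemma dmat_diff: "dmat a - dmat b = dmat (\<lambda>i. a i - b i)"
  by (simp add: vec_eq_iff dmat_def)

lemma det_dmat: "det (dmat l) = prod l UNIV"
  by (subst det_diagonal) (auto simp: dmat_def)

lemma trace_dmat: "trace (dmat l) = sum l UNIV"
  by (simp add: trace_def dmat_def)

lemma dmat_vec: "dmat l *v x = (\<chi> i. l i * x $ i)"
proof -
  have "(\<Sum>j\<in>UNIV. (if i = j then l i else 0) * x $ j) = l i * x $ i" for i
  proof -
    have "(\<Sum>j\<in>UNIV. (if i = j then l i else 0) * x $ j) = (\<Sum>j\<in>UNIV. if j = i then l i * x $ i else 0)"
      by (intro sum.cong) auto
    then show ?thesis by simp
  qed
  then show ?thesis by (simp add: vec_eq_iff matrix_vector_mult_def dmat_def)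
qed

lemma dmat_quad: "x \<bullet> (dmat l *v x) = (\<Sum>i\<in>UNIV. l i * (x $ i)^2)"
  by (simp add: dmat_vec inner_vec_def power2_eq_square algebra_simps)

lemma orth_PPt: "orthogonal_matrix P \<Longrightarrow> P ** transpose P = mat 1"
  by (simp add: orthogonal_matrix_def)

lemma orth_PtP: "orthogonal_matrix P \<Longrightarrow> transpose P ** P = mat 1"
  by (simp add: orthogonal_matrix_def)

lemma conj_mult:
  fixes P :: "real^'n^'n"
  assumes "orthogonal_matrix P"
  shows "(P ** X ** transpose P) ** (P ** Y ** transpose P) = P ** (X ** Y) ** transpose P"
proof -
  have "(P ** X ** transpose P) ** (P ** Y ** transpose P) = P ** X ** (transpose P ** P) ** Y ** transpose P"
    by (simp add: matrix_mul_assoc)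
  also have "\<dots> = P ** (X ** Y) ** transpose P" using orth_PtP[OF assms] by (simp add: matrix_mul_assoc)
  finally show ?thesis .
qed

lemma trace_conj:
  fixes P :: "real^'n^'n"
  assumes "orthogonal_matrix P"
  shows "trace (P ** X ** transpose P) = trace X"
proof -
  have "trace (P ** X ** transpose P) = trace (transpose P ** (P ** X))"
    using trace_mul_sym by metis
  also have "\<dots> = trace X" using orth_PtP[OF assms] by (simp add: matrix_mul_assoc)
  finally show ?thesis .
qed

lemma det_conj:
  fixes P :: "real^'n^'n"
  assumes "orthogonal_matrix P"
  shows "det (P ** X ** transpose P) = det X"
proof -
  have "det P * det P = 1" using det_orthogonal_matrix[OF assms] by auto
  then show ?thesis by (simp add: det_mul)
qed

lemma frob_trace:
  fixes M :: "real^'n^'n"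
  shows "(\<Sum>i\<in>UNIV. \<Sum>j\<in>UNIV. (M $ i $ j)^2) = trace (transpose M ** M)"
proof -
  have "trace (transpose M ** M) = (\<Sum>j\<in>UNIV. \<Sum>i\<in>UNIV. M$i$j * M$i$j)"
    by (simp add: trace_def matrix_matrix_mult_def transpose_def)
  also have "\<dots> = (\<Sum>i\<in>UNIV. \<Sum>j\<in>UNIV. M$i$j * M$i$j)" by (rule sum.swap)
  finally show ?thesis by (simp add: power2_eq_square)
qed

lemma transpose_conj:
  fixes P :: "real^'n^'n"
  shows "transpose (P ** X ** transpose P) = P ** transpose X ** transpose P"
  by (simp add: matrix_transpose_mul matrix_mul_assoc)

lemma transpose_dmat: "transpose (dmat l) = dmat l"
  by (simp add: vec_eq_iff transpose_def dmat_def)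

lemma frob_conj_dmat:
  fixes P :: "real^'n^'n"
  assumes "orthogonal_matrix P"
  shows "(\<Sum>i\<in>UNIV. \<Sum>j\<in>UNIV. ((P ** dmat l ** transpose P) $ i $ j)^2) = (\<Sum>i\<in>UNIV. (l i)^2)"
  unfolding frob_trace transpose_conj transpose_dmat conj_mult[OF assms] trace_conj[OF assms]
    dmat_mult trace_dmat by (simp add: power2_eq_square)

lemma dot_transp:
  fixes P :: "real^'n^'n"
  shows "u \<bullet> (P *v y) = (transpose P *v u) \<bullet> y"
  by (metis dot_lmul_matrix vector_transpose_matrix transpose_transpose)

lemma quad_conj:
  fixes P :: "real^'n^'n"
  shows "u \<bullet> ((P ** X ** transpose P) *v u) = (transpose P *v u) \<bullet> (X *v (transpose P *v u))"
proof -
  have "(P ** X ** transpose P) *v u = P *v (X *v (transpose P *v u))"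
    by (simp only: matrix_vector_mul_assoc matrix_mul_assoc)
  then show ?thesis by (simp only: dot_transp)
qed

lemma norm_orth_vec:
  fixes P :: "real^'n^'n"
  assumes "orthogonal_matrix P"
  shows "(transpose P *v u) \<bullet> (transpose P *v u) = u \<bullet> u"
proof -
  have "(transpose P *v u) \<bullet> (transpose P *v u) = u \<bullet> ((P ** mat 1 ** transpose P) *v u)"
    using quad_conj[of u P "mat 1"] by simp
  also have "\<dots> = u \<bullet> u" using orth_PPt[OF assms] by simp
  finally show ?thesis .
qed

lemma sum_sq_vec: "x \<bullet> x = (\<Sum>i\<in>UNIV. (x $ i)^2)"
  by (simp add: inner_vec_def power2_eq_square)



lemma orth_vec_inv:
  fixes P :: "real^'n^'n"
  assumes "orthogonal_matrix P"
  shows "transpose P *v (P *v x) = x" "P *v (transpose P *v x) = x"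
  by (simp_all only: matrix_vector_mul_assoc orth_PtP[OF assms] orth_PPt[OF assms] matrix_vector_mul_lid)

lemma dmat_axis: "dmat \<mu> *v axis j 1 = \<mu> j *\<^sub>R axis j 1"
  by (simp add: dmat_vec vec_eq_iff axis_def)

lemma axis_quad: "axis j 1 \<bullet> (dmat \<mu> *v axis j (1::real)) = \<mu> j"
  by (simp add: dmat_axis)

lemma spd_decomp:
  fixes S :: "real^'n^'n"
  assumes spd: "sym_pos_def S"
  obtains P \<mu> where "orthogonal_matrix P" "\<And>j. \<mu> j > 0" "S = P ** dmat \<mu> ** transpose P"
    "matrix_inv S = P ** dmat (\<lambda>j. 1 / \<mu> j) ** transpose P"
proof -
  have sym: "transpose S = S" and pos: "\<And>x. x \<noteq> 0 \<Longrightarrow> x \<bullet> (S *v x) > 0"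
    using spd unfolding sym_pos_def_def by auto
  obtain P \<mu> where oP: "orthogonal_matrix P" and SP: "S = P ** dmat \<mu> ** transpose P"
    using spectral[OF sym] by blast
  have mpos: "\<mu> j > 0" for j
  proof -
    define c where "c = P *v axis j 1"
    have tc: "transpose P *v c = axis j 1" unfolding c_def using orth_vec_inv[OF oP] by simp
    have "c \<noteq> 0" using tc by (metis axis_eq_0_iff matrix_vector_mult_0_right zero_neq_one)
    then have "c \<bullet> (S *v c) > 0" by (rule pos)
    also have "c \<bullet> (S *v c) = axis j 1 \<bullet> (dmat \<mu> *v axis j 1)"
      using quad_conj[of c P "dmat \<mu>"] SP tc by simp
    also have "\<dots> = \<mu> j" by (rule axis_quad)
    finally show ?thesis .
  qed
  have "S ** (P ** dmat (\<lambda>j. 1 / \<mu> j) ** transpose P) = mat 1"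
  proof -
    have "S ** (P ** dmat (\<lambda>j. 1 / \<mu> j) ** transpose P) = P ** (dmat \<mu> ** dmat (\<lambda>j. 1 / \<mu> j)) ** transpose P"
      unfolding SP by (rule conj_mult[OF oP])
    also have "dmat \<mu> ** dmat (\<lambda>j. 1 / \<mu> j) = mat 1"
      using mpos by (simp add: dmat_mult dmat_one[symmetric] less_imp_neq[symmetric])
    finally show ?thesis using orth_PPt[OF oP] by simp
  qed
  then have "matrix_inv S = P ** dmat (\<lambda>j. 1 / \<mu> j) ** transpose P" by (rule matrix_inv_eq)
  then show ?thesis using that oP mpos SP by blast
qed

lemma eigenvalues_decomp:
  fixes S :: "real^'n^'n"
  assumes oP: "orthogonal_matrix P" and SP: "S = P ** dmat \<mu> ** transpose P"
  shows "mat_eigenvalues S = range \<mu>"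
proof
  show "range \<mu> \<subseteq> mat_eigenvalues S"
  proof
    fix l assume "l \<in> range \<mu>"
    then obtain j where lj: "l = \<mu> j" by blast
    define c where "c = P *v axis j 1"
    have tc: "transpose P *v c = axis j 1" unfolding c_def using orth_vec_inv[OF oP] by simp
    have "c \<noteq> 0" using tc by (metis axis_eq_0_iff matrix_vector_mult_0_right zero_neq_one)
    moreover have "S *v c = l *\<^sub>R c"
    proof -
      have "S *v c = P *v (dmat \<mu> *v (transpose P *v c))" unfolding SP
        by (simp only: matrix_vector_mul_assoc matrix_mul_assoc)
      also have "dmat \<mu> *v (transpose P *v c) = l *\<^sub>R axis j 1"
        unfolding tc lj by (rule dmat_axis)
      finally show ?thesis by (simp add: c_def matrix_vector_mult_scaleR)
    qed
    ultimately show "l \<in> mat_eigenvalues S" unfolding mat_eigenvalues_def by blast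
  qed
next
  show "mat_eigenvalues S \<subseteq> range \<mu>"
  proof
    fix l assume "l \<in> mat_eigenvalues S"
    then obtain v where v0: "v \<noteq> 0" and ev: "S *v v = l *\<^sub>R v" unfolding mat_eigenvalues_def by blast
    define w where "w = transpose P *v v"
    have "w \<bullet> w = v \<bullet> v" unfolding w_def by (rule norm_orth_vec[OF oP])
    then have "w \<noteq> 0" using v0 by auto
    then obtain i where wi: "w $ i \<noteq> 0" by (auto simp: vec_eq_iff)
    have "dmat \<mu> *v w = transpose P *v (S *v v)"
    proof -
      have "S *v v = P *v (dmat \<mu> *v w)" unfolding SP w_def
        by (simp only: matrix_vector_mul_assoc matrix_mul_assoc)
      then show ?thesis using orth_vec_inv[OF oP] by simp
    qed
    also have "\<dots> = l *\<^sub>R w" by (simp add: ev w_def matrix_vector_mult_scaleR)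
    finally have "\<mu> i * w $ i = l * w $ i" by (simp add: dmat_vec vec_eq_iff)
    then have "l = \<mu> i" using wi by simp
    then show "l \<in> range \<mu>" by blast
  qed
qed

lemma row_quad:
  fixes R A :: "real^'n^'n"
  shows "(R ** A ** transpose R) $ i $ i = (R $ i) \<bullet> (A *v (R $ i))"
  by (simp add: matrix_matrix_mult_def matrix_vector_mult_def inner_vec_def transpose_def
      sum_distrib_left sum_distrib_right mult.assoc mult.left_commute) (rule sum.swap)

lemma orth_row_norm:
  fixes R :: "real^'n^'n"
  assumes "orthogonal_matrix R"
  shows "(R $ i) \<bullet> (R $ i) = 1"
proof -
  have "(R ** transpose R) $ i $ i = 1" using orth_PPt[OF assms] by (simp add: mat_def)
  then show ?thesis by (simp add: matrix_matrix_mult_def transpose_def inner_vec_def)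
qed



definition xf :: "real^'n^'n \<Rightarrow> real^'n^'n \<Rightarrow> 'n \<Rightarrow> 'n \<Rightarrow> real" where
  "xf C R i k = (R $ i) \<bullet> (C *v (R $ k))"

lemma conj_entry:
  fixes R C :: "real^'n^'n"
  shows "(R ** C ** transpose R) $ i $ k = xf C R i k"
  unfolding xf_def
  by (simp add: matrix_matrix_mult_def matrix_vector_mult_def inner_vec_def transpose_def
      sum_distrib_left sum_distrib_right mult.assoc mult.left_commute) (rule sum.swap)

definition rot :: "'n \<Rightarrow> 'n \<Rightarrow> real \<Rightarrow> real^'n^'n" where
  "rot i k \<sigma> = (\<chi> a. if a = i then (1/sqrt 2) *\<^sub>R axis i 1 + (\<sigma>/sqrt 2) *\<^sub>R axis k 1
     else if a = k then (-\<sigma>/sqrt 2) *\<^sub>R axis i 1 + (1/sqrt 2) *\<^sub>R axis k 1 else axis a 1)"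

lemma mm_rows: "(A ** B) $ a $ b = (A $ a) \<bullet> (transpose B $ b)"
  for A B :: "real^'n^'n"
  by (simp add: matrix_matrix_mult_def inner_vec_def transpose_def)

lemma axis_inner: "axis a (1::real) \<bullet> axis b 1 = (if a = b then 1 else 0)"
  by (simp add: inner_axis_axis)

lemma rot_orth:
  fixes i k :: "'n::finite"
  assumes ik: "i \<noteq> k" and s: "\<sigma>^2 = 1"
  shows "orthogonal_matrix (rot i k \<sigma>)"
proof -
  have h: "(1/sqrt 2) * (1/sqrt 2) = (1/2::real)"
  proof -
    have "sqrt 2 * sqrt 2 = (2::real)" by simp
    then show ?thesis by (simp add: field_simps)
  qed
  have s2: "\<sigma> * \<sigma> = 1" using s by (simp add: power2_eq_square)
  have "rot i k \<sigma> ** transpose (rot i k \<sigma>) = mat 1"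
  proof (simp only: vec_eq_iff, intro allI)
    fix a b
    have "(rot i k \<sigma> ** transpose (rot i k \<sigma>)) $ a $ b = (rot i k \<sigma> $ a) \<bullet> (rot i k \<sigma> $ b)"
      by (simp add: mm_rows)
    also have "\<dots> = mat 1 $ a $ b"
      using ik unfolding rot_def
      by (auto simp: inner_add_left inner_add_right axis_inner mat_def h s2 algebra_simps)
    finally show "(rot i k \<sigma> ** transpose (rot i k \<sigma>)) $ a $ b = mat 1 $ a $ b" .
  qed
  then have "orthogonal_matrix (transpose (rot i k \<sigma>))"
    unfolding orthogonal_matrix by simp
  then show ?thesis by simp
qed

lemma rot_row:
  fixes R :: "real^'n^'n"
  assumes "i \<noteq> k"
  shows "(rot i k \<sigma> ** R) $ i = (1/sqrt 2) *\<^sub>R R $ i + (\<sigma>/sqrt 2) *\<^sub>R R $ k"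
proof -
  have "(rot i k \<sigma> ** R) $ i $ j = (1/sqrt 2) * R $ i $ j + (\<sigma>/sqrt 2) * R $ k $ j" for j
    unfolding mm_rows using assms unfolding rot_def
    by (simp add: inner_add_left inner_axis' transpose_def)
  then show ?thesis by (simp add: vec_eq_iff)
qed

lemma xf_rot:
  fixes R C :: "real^'n^'n"
  assumes ik: "i \<noteq> k" and s: "\<sigma>^2 = 1" and sym: "transpose C = C"
  shows "xf C (rot i k \<sigma> ** R) i i = (xf C R i i + xf C R k k)/2 + \<sigma> * xf C R i k"
proof -
  have h: "(1/sqrt 2) * (1/sqrt 2) = (1/2::real)"
  proof -
    have "sqrt 2 * sqrt 2 = (2::real)" by simp
    then show ?thesis by (simp add: field_simps)
  qed
  have sw: "xf C R k i = xf C R i k" unfolding xf_def using sym_inner_swap[OF sym, of "R $ k" "R $ i"]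
    by (simp add: inner_commute)
  have "xf C (rot i k \<sigma> ** R) i i = (1/sqrt 2) * (1/sqrt 2) * xf C R i i + (1/sqrt 2) * (\<sigma>/sqrt 2) * xf C R i k
     + (\<sigma>/sqrt 2) * (1/sqrt 2) * xf C R k i + (\<sigma>/sqrt 2) * (\<sigma>/sqrt 2) * xf C R k k"
    unfolding xf_def rot_row[OF ik]
    by (simp add: matrix_vector_right_distrib matrix_vector_mult_scaleR inner_add_left inner_add_right
        algebra_simps)
  also have "\<dots> = (xf C R i i + xf C R k k)/2 + \<sigma> * xf C R i k"
    using s unfolding sw by (simp add: power2_eq_square field_simps)
  finally show ?thesis .
qed

lemma haar_facts:
  assumes "haar_orthogonal M"
  shows "prob_space M" "sets M = sets borel" "space M = UNIV" "AE R in M. orthogonal_matrix R"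
proof -
  show p: "prob_space M" and s: "sets M = sets borel" using assms by (auto simp: haar_orthogonal_def)
  have "space M = space borel" by (rule sets_eq_imp_space_eq[OF s])
  then show "space M = UNIV" by simp
  have "measure M {R. orthogonal_matrix R} = 1" using assms by (auto simp: haar_orthogonal_def)
  then show "AE R in M. orthogonal_matrix R" using prob_space.AE_prob_1[OF p, of "{R. orthogonal_matrix R}"] by simp
qed

lemma haar_meas:
  fixes f :: "real^'n^'n \<Rightarrow> real"
  assumes "haar_orthogonal M" "continuous_on UNIV f"
  shows "f \<in> borel_measurable M"
proof -
  have "f \<in> borel_measurable borel" by (rule borel_measurable_continuous_onI[OF assms(2)])
  moreover have "(borel_measurable M :: (real^'n^'n \<Rightarrow> real) set) = borel_measurable borel"
    by (rule measurable_cong_sets[OF haar_facts(2)[OF assms(1)] refl])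
  ultimately show ?thesis by simp
qed

lemma orth_set_compact: "compact {R :: real^'n^'n. orthogonal_matrix R}"
  unfolding compact_eq_bounded_closed
proof (rule conjI[rotated])
  have "{R :: real^'n^'n. orthogonal_matrix R} = {R. transpose R ** R = mat 1}"
    by (simp add: orthogonal_matrix)
  moreover have "closed {R :: real^'n^'n. transpose R ** R = mat 1}"
    by (rule closed_Collect_eq) (auto simp: matrix_matrix_mult_def transpose_def intro!: continuous_intros)
  ultimately show "closed {R :: real^'n^'n. orthogonal_matrix R}" by simp
  show "bounded {R :: real^'n^'n. orthogonal_matrix R}"
    unfolding bounded_iff
  proof (intro exI ballI)
    fix R :: "real^'n^'n" assume "R \<in> {R. orthogonal_matrix R}"
    then have "norm (R $ i) = 1" for i using orth_row_norm by (simp add: norm_eq_1)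
    then have "norm R = L2_set (\<lambda>i. 1) (UNIV::'n set)"
      unfolding norm_vec_def by (intro L2_set_cong) auto
    then show "norm R \<le> sqrt (real CARD('n))" by (simp add: L2_set_constant)
  qed
qed

lemma haar_integrable:
  assumes H: "haar_orthogonal M" and c: "continuous_on UNIV (f :: real^'n^'n \<Rightarrow> real)"
  shows "integrable M f"
proof -
  interpret prob_space M using haar_facts(1)[OF H] .
  have "compact (f ` {R. orthogonal_matrix R})"
    by (rule compact_continuous_image[OF continuous_on_subset[OF c] orth_set_compact]) auto
  then obtain B where B: "\<And>y. y \<in> f ` {R. orthogonal_matrix R} \<Longrightarrow> norm y \<le> B"
    using compact_imp_bounded bounded_iff by metis
  have "AE R in M. norm (f R) \<le> B" using haar_facts(4)[OF H] B by (auto elim!: AE_mp)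
  then show ?thesis by (rule integrable_const_bound) (rule haar_meas[OF H c])
qed

lemma haar_inv:
  assumes H: "haar_orthogonal M" and Q: "orthogonal_matrix Q" and c: "continuous_on UNIV (f :: real^'n^'n \<Rightarrow> real)"
  shows "integral\<^sup>L M f = integral\<^sup>L M (\<lambda>R. f (Q ** R))"
proof -
  have d: "distr M M (\<lambda>R. Q ** R) = M" using H Q by (auto simp: haar_orthogonal_def)
  have cm: "continuous_on UNIV (\<lambda>R::real^'n^'n. Q ** R)"
    by (auto simp: matrix_matrix_mult_def intro!: continuous_intros)
  have "(\<lambda>R::real^'n^'n. Q ** R) \<in> borel_measurable borel" by (rule borel_measurable_continuous_onI[OF cm])
  moreover have "measurable M M = measurable borel (borel :: (real^'n^'n) measure)"
    by (rule measurable_cong_sets[OF haar_facts(2)[OF H] haar_facts(2)[OF H]])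
  ultimately have m: "(\<lambda>R::real^'n^'n. Q ** R) \<in> measurable M M" by simp
  have "integral\<^sup>L M f = integral\<^sup>L (distr M M (\<lambda>R. Q ** R)) f" using d by simp
  also have "\<dots> = integral\<^sup>L M (\<lambda>R. f (Q ** R))" by (rule integral_distr[OF m haar_meas[OF H c]])
  finally show ?thesis .
qed

lemma xf_cont: "continuous_on UNIV (\<lambda>R. xf C R i k)"
  unfolding xf_def by (auto simp: matrix_vector_mult_def inner_vec_def intro!: continuous_intros)

lemma haar_pair:
  fixes C :: "real^'n^'n"
  assumes H: "haar_orthogonal M" and sym: "transpose C = C" and ik: "i \<noteq> k"
  shows "integral\<^sup>L M (\<lambda>R. 4*(xf C R i i)^2 - (xf C R i i + xf C R k k)^2 - 4*(xf C R i k)^2) = 0"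
proof -
  define f where "f \<sigma> R = ((xf C R i i + xf C R k k)/2 + \<sigma> * xf C R i k)^2" for \<sigma> R
  define f0 where "f0 R = (xf C R i i)^2" for R
  have c0: "continuous_on UNIV f0" unfolding f0_def by (intro continuous_intros xf_cont)
  have cf: "continuous_on UNIV (f \<sigma>)" for \<sigma> unfolding f_def by (intro continuous_intros xf_cont) auto
  have inv: "integral\<^sup>L M f0 = integral\<^sup>L M (f \<sigma>)" if s: "\<sigma>^2 = 1" for \<sigma>
  proof -
    have "integral\<^sup>L M f0 = integral\<^sup>L M (\<lambda>R. f0 (rot i k \<sigma> ** R))"
      by (rule haar_inv[OF H rot_orth[OF ik s] c0])
    also have "(\<lambda>R. f0 (rot i k \<sigma> ** R)) = f \<sigma>"
      unfolding f0_def f_def by (simp add: xf_rot[OF ik s sym] fun_eq_iff)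
    finally show ?thesis .
  qed
  have i0: "integrable M f0" by (rule haar_integrable[OF H c0])
  have i1: "integrable M (f \<sigma>)" for \<sigma> by (rule haar_integrable[OF H cf])
  have pw: "(\<lambda>R. 4*(xf C R i i)^2 - (xf C R i i + xf C R k k)^2 - 4*(xf C R i k)^2) =
     (\<lambda>R. 2 * (f0 R - f 1 R) + 2 * (f0 R - f (-1) R))"
    unfolding f0_def f_def by (simp add: fun_eq_iff power2_eq_square algebra_simps)
  have "integral\<^sup>L M (\<lambda>R. 2 * (f0 R - f 1 R) + 2 * (f0 R - f (-1) R)) =
      2 * (integral\<^sup>L M f0 - integral\<^sup>L M (f 1)) + 2 * (integral\<^sup>L M f0 - integral\<^sup>L M (f (-1)))"
    using i0 i1 by simp
  also have "\<dots> = 0" using inv[of 1] inv[of "-1"] by simp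
  finally show ?thesis unfolding pw .
qed

lemma haar_moment:
  fixes C :: "real^'n^'n"
  assumes H: "haar_orthogonal M" and sym: "transpose C = C" and tr: "trace C = 0"
  shows "integral\<^sup>L M (\<lambda>R. \<Sum>i\<in>UNIV. (xf C R i i)^2) =
     2 * (\<Sum>j\<in>UNIV. \<Sum>l\<in>UNIV. (C $ j $ l)^2) / (real CARD('n) + 2)"
proof -
  interpret prob_space M using haar_facts(1)[OF H] .
  define F where "F = (\<Sum>j\<in>UNIV. \<Sum>l\<in>UNIV. (C $ j $ l)^2)"
  define d where "d = real CARD('n)"
  define Hf where "Hf i k R = 4*(xf C R i i)^2 - (xf C R i i + xf C R k k)^2 - 4*(xf C R i k)^2" for i k R
  define P where "P R = (\<Sum>i\<in>UNIV. (xf C R i i)^2)" for R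
  have cH: "continuous_on UNIV (\<lambda>R. if k = i then 0 else Hf i k R)" for i k
    unfolding Hf_def by (cases "k = i") (auto intro!: continuous_intros xf_cont)
  have iH: "integrable M (\<lambda>R. if k = i then 0 else Hf i k R)" for i k
    by (rule haar_integrable[OF H cH])
  have zH: "integral\<^sup>L M (\<lambda>R. if k = i then 0 else Hf i k R) = 0" for i k
  proof (cases "k = i")
    case True then show ?thesis by simp
  next
    case False then show ?thesis unfolding Hf_def using haar_pair[OF H sym, of i k] by simp
  qed
  have Z: "integral\<^sup>L M (\<lambda>R. \<Sum>i\<in>UNIV. \<Sum>k\<in>UNIV. if k = i then 0 else Hf i k R) = 0"
    using iH zH by (simp add: integral_sum integrable_sum)
  have pw: "(\<Sum>i\<in>UNIV. \<Sum>k\<in>UNIV. if k = i then 0 else Hf i k R) = (2*d + 4) * P R - 4 * F"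
    if oR: "orthogonal_matrix R" for R
  proof -
    define a where "a i = xf C R i i" for i
    define X where "X = R ** C ** transpose R"
    have Xe: "X $ i $ k = xf C R i k" for i k unfolding X_def by (rule conj_entry)
    have S0: "(\<Sum>i\<in>UNIV. a i) = 0"
    proof -
      have "(\<Sum>i\<in>UNIV. a i) = trace X" unfolding a_def trace_def Xe ..
      also have "\<dots> = trace C" unfolding X_def by (rule trace_conj[OF oR])
      finally show ?thesis using tr by simp
    qed
    have T: "(\<Sum>i\<in>UNIV. \<Sum>k\<in>UNIV. (xf C R i k)^2) = F"
    proof -
      have "transpose X = X" unfolding X_def transpose_conj sym ..
      then have "(\<Sum>i\<in>UNIV. \<Sum>k\<in>UNIV. (xf C R i k)^2) = trace (X ** X)"
        using frob_trace[of X] by (simp add: Xe)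
      also have "X ** X = R ** (C ** C) ** transpose R" unfolding X_def by (rule conj_mult[OF oR])
      also have "trace \<dots> = trace (transpose C ** C)" using trace_conj[OF oR] sym by simp
      also have "\<dots> = F" unfolding F_def frob_trace ..
      finally show ?thesis .
    qed
    have inner: "(\<Sum>k\<in>UNIV. if k = i then 0 else Hf i k R) =
        (3 * d * (a i)^2 - 2 * a i * (\<Sum>k\<in>UNIV. a k) - P R - 4 * (\<Sum>k\<in>UNIV. (xf C R i k)^2)) + 4 * (a i)^2" for i
    proof -
      have "(\<Sum>k\<in>UNIV. if k = i then 0 else Hf i k R) = (\<Sum>k\<in>UNIV. Hf i k R) - Hf i i R"
      proof -
        have "(\<Sum>k\<in>UNIV. if k = i then 0 else Hf i k R) = (\<Sum>k\<in>UNIV. Hf i k R - (if k = i then Hf i i R else 0))"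
          by (intro sum.cong) auto
        then show ?thesis by (simp add: sum_subtractf)
      qed
      also have "(\<Sum>k\<in>UNIV. Hf i k R) = (\<Sum>k\<in>UNIV. 3 * (a i)^2 - 2 * a i * a k - (a k)^2 - 4 * (xf C R i k)^2)"
        unfolding Hf_def a_def by (intro sum.cong) (auto simp: power2_eq_square algebra_simps)
      also have "\<dots> = 3 * d * (a i)^2 - 2 * a i * (\<Sum>k\<in>UNIV. a k) - P R - 4 * (\<Sum>k\<in>UNIV. (xf C R i k)^2)"
        unfolding P_def a_def d_def by (simp add: sum_subtractf sum_distrib_left sum_distrib_right)
      also have "Hf i i R = - 4 * (a i)^2" unfolding Hf_def a_def by (simp add: power2_eq_square algebra_simps)
      finally show ?thesis by simp
    qed
    have "(\<Sum>i\<in>UNIV. \<Sum>k\<in>UNIV. if k = i then 0 else Hf i k R) =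
        (\<Sum>i\<in>UNIV. 3 * d * (a i)^2 + 4 * (a i)^2 - P R - 4 * (\<Sum>k\<in>UNIV. (xf C R i k)^2))"
      unfolding inner S0 by (simp add: algebra_simps)
    also have "\<dots> = 3 * d * P R + 4 * P R - d * P R - 4 * F"
      unfolding T[symmetric] P_def a_def d_def
      by (simp add: sum_subtractf sum.distrib sum_distrib_left)
    finally show ?thesis by (simp add: algebra_simps)
  qed
  have iP: "integrable M P" unfolding P_def by (rule haar_integrable[OF H]) (intro continuous_intros xf_cont)
  have "integral\<^sup>L M (\<lambda>R. (2*d + 4) * P R - 4 * F) = integral\<^sup>L M (\<lambda>R. \<Sum>i\<in>UNIV. \<Sum>k\<in>UNIV. if k = i then 0 else Hf i k R)"
  proof (rule integral_cong_AE)
    show "(\<lambda>R. (2*d + 4) * P R - 4 * F) \<in> borel_measurable M"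
      by (rule haar_meas[OF H]) (unfold P_def, intro continuous_intros xf_cont)
    show "(\<lambda>R. \<Sum>i\<in>UNIV. \<Sum>k\<in>UNIV. if k = i then 0 else Hf i k R) \<in> borel_measurable M"
      using iH by (intro borel_measurable_integrable integrable_sum) auto
    show "AE R in M. (2*d + 4) * P R - 4 * F = (\<Sum>i\<in>UNIV. \<Sum>k\<in>UNIV. if k = i then 0 else Hf i k R)"
      using haar_facts(4)[OF H] pw by (auto elim!: AE_mp)
  qed
  then have "(2*d + 4) * integral\<^sup>L M P - 4 * F = 0" using Z iP by (simp add: prob_space)
  then have "integral\<^sup>L M P = 2 * F / (d + 2)" unfolding d_def by (simp add: field_simps)
  then show ?thesis unfolding P_def F_def d_def .
qed



lemma lborel_prod_basis:
  fixes h :: "'a::euclidean_space \<Rightarrow> real \<Rightarrow> real"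
  assumes int: "\<And>b. b \<in> Basis \<Longrightarrow> integrable lborel (h b)"
  shows "integrable lborel (\<lambda>x::'a. \<Prod>b\<in>Basis. h b (x \<bullet> b))"
    "integral\<^sup>L lborel (\<lambda>x::'a. \<Prod>b\<in>Basis. h b (x \<bullet> b)) = (\<Prod>b\<in>Basis. integral\<^sup>L lborel (h b))"
proof -
  interpret P: product_sigma_finite "\<lambda>_::'a. lborel :: real measure" by standard
  define \<phi> where "\<phi> = (\<lambda>g. \<Sum>b\<in>(Basis::'a set). g b *\<^sub>R b)"
  have phim: "\<phi> \<in> measurable (\<Pi>\<^sub>M b\<in>Basis. lborel) borel" unfolding \<phi>_def by measurable
  have hm[measurable]: "h b \<in> borel_measurable borel" if "b \<in> Basis" for b
    using borel_measurable_integrable[OF int[OF that]] by simp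
  have Fm: "(\<lambda>x::'a. \<Prod>b\<in>Basis. h b (x \<bullet> b)) \<in> borel_measurable borel"
    by measurable
  have comp: "(\<Prod>b\<in>Basis. h b (\<phi> g \<bullet> b)) = (\<Prod>b\<in>Basis. h b (g b))" for g
  proof (rule prod.cong[OF refl])
    fix b :: 'a assume b: "b \<in> Basis"
    have "\<phi> g \<bullet> b = (\<Sum>b'\<in>Basis. g b' * (b' \<bullet> b))" unfolding \<phi>_def by (simp add: inner_sum_left)
    also have "\<dots> = g b" using b by (simp add: inner_Basis if_distrib cong: if_cong)
    finally show "h b (\<phi> g \<bullet> b) = h b (g b)" by simp
  qed
  have iP: "integrable (\<Pi>\<^sub>M b\<in>Basis. lborel) (\<lambda>g. \<Prod>b\<in>Basis. h b (g b))"
    by (rule P.product_integrable_prod) (auto intro: int)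
  have "integrable (distr (\<Pi>\<^sub>M b\<in>Basis. lborel) borel \<phi>) (\<lambda>x::'a. \<Prod>b\<in>Basis. h b (x \<bullet> b))"
    using integrable_distr_eq[OF phim Fm] comp iP by simp
  then show "integrable lborel (\<lambda>x::'a. \<Prod>b\<in>Basis. h b (x \<bullet> b))"
    unfolding lborel_eq[where 'a='a] \<phi>_def .
  have "integral\<^sup>L (distr (\<Pi>\<^sub>M b\<in>Basis. lborel) borel \<phi>) (\<lambda>x::'a. \<Prod>b\<in>Basis. h b (x \<bullet> b)) =
      integral\<^sup>L (\<Pi>\<^sub>M b\<in>Basis. lborel) (\<lambda>g. \<Prod>b\<in>Basis. h b (\<phi> g \<bullet> b))"
    by (rule integral_distr[OF phim Fm])
  then have "integral\<^sup>L lborel (\<lambda>x::'a. \<Prod>b\<in>Basis. h b (x \<bullet> b)) =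
      integral\<^sup>L (\<Pi>\<^sub>M b\<in>Basis. lborel) (\<lambda>g. \<Prod>b\<in>Basis. h b (\<phi> g \<bullet> b))"
    unfolding lborel_eq[where 'a='a] \<phi>_def .
  also have "\<dots> = (\<Prod>b\<in>Basis. integral\<^sup>L lborel (h b))"
    unfolding comp by (rule P.product_integral_prod) (auto intro: int)
  finally show "integral\<^sup>L lborel (\<lambda>x::'a. \<Prod>b\<in>Basis. h b (x \<bullet> b)) = (\<Prod>b\<in>Basis. integral\<^sup>L lborel (h b))" .
qed

lemma Basis_vec_range: "(Basis :: (real^'n) set) = range (\<lambda>i. axis i 1)"
  by (auto simp: Basis_vec_def)

lemma inj_axis1: "inj (\<lambda>i::'n::finite. axis i (1::real))"
  by (auto simp: inj_def axis_eq_axis)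

lemma prod_Basis_vec:
  fixes H :: "real^'n \<Rightarrow> real"
  shows "(\<Prod>b\<in>Basis. H b) = (\<Prod>i\<in>UNIV. H (axis i 1))"
  unfolding Basis_vec_range by (subst prod.reindex[OF inj_axis1]) (simp add: comp_def)

lemma lborel_vec_prod:
  fixes f :: "'n::finite \<Rightarrow> real \<Rightarrow> real"
  assumes int: "\<And>i. integrable lborel (f i)"
  shows "integrable lborel (\<lambda>x::real^'n. \<Prod>i\<in>UNIV. f i (x $ i))"
    "integral\<^sup>L lborel (\<lambda>x::real^'n. \<Prod>i\<in>UNIV. f i (x $ i)) = (\<Prod>i\<in>UNIV. integral\<^sup>L lborel (f i))"
proof -
  define h where "h b = f (SOME i. b = axis i (1::real))" for b :: "real^'n"
  have hax: "h (axis i 1) = f i" for i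
    unfolding h_def by (rule arg_cong[where f=f], rule some_equality) (auto simp: axis_eq_axis)
  have eq1: "(\<lambda>x::real^'n. \<Prod>i\<in>UNIV. f i (x $ i)) = (\<lambda>x. \<Prod>b\<in>Basis. h b (x \<bullet> b))"
    by (simp add: prod_Basis_vec hax inner_axis)
  have eq2: "(\<Prod>i\<in>UNIV. integral\<^sup>L lborel (f i)) = (\<Prod>b\<in>(Basis::(real^'n) set). integral\<^sup>L lborel (h b))"
    by (simp add: prod_Basis_vec hax)
  have ih: "integrable lborel (h b)" if "b \<in> Basis" for b :: "real^'n"
    using that int by (auto simp: Basis_vec_range hax)
  show "integrable lborel (\<lambda>x::real^'n. \<Prod>i\<in>UNIV. f i (x $ i))"
    unfolding eq1 by (rule lborel_prod_basis(1)[OF ih])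
  show "integral\<^sup>L lborel (\<lambda>x::real^'n. \<Prod>i\<in>UNIV. f i (x $ i)) = (\<Prod>i\<in>UNIV. integral\<^sup>L lborel (f i))"
    unfolding eq1 eq2 by (rule lborel_prod_basis(2)[OF ih])
qed

lemma KL_int:
  fixes f :: "'a::euclidean_space \<Rightarrow> real"
  assumes int: "integrable lborel f"
  shows "enn2ereal (\<integral>\<^sup>+x. ennreal (f x) \<partial>lborel) - enn2ereal (\<integral>\<^sup>+x. ennreal (- f x) \<partial>lborel)
     = ereal (integral\<^sup>L lborel f)"
proof -
  have ip: "integrable lborel (\<lambda>x. max (f x) 0)" using int by auto
  have im: "integrable lborel (\<lambda>x. max (- f x) 0)" using int by auto
  have e1: "(\<integral>\<^sup>+x. ennreal (f x) \<partial>lborel) = ennreal (integral\<^sup>L lborel (\<lambda>x. max (f x) 0))"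
  proof -
    have "(\<integral>\<^sup>+x. ennreal (f x) \<partial>lborel) = (\<integral>\<^sup>+x. ennreal (max (f x) 0) \<partial>lborel)"
      by (simp add: ennreal_max_0)
    also have "\<dots> = ennreal (integral\<^sup>L lborel (\<lambda>x. max (f x) 0))"
      by (rule nn_integral_eq_integral[OF ip]) auto
    finally show ?thesis .
  qed
  have e2: "(\<integral>\<^sup>+x. ennreal (- f x) \<partial>lborel) = ennreal (integral\<^sup>L lborel (\<lambda>x. max (- f x) 0))"
  proof -
    have "(\<integral>\<^sup>+x. ennreal (- f x) \<partial>lborel) = (\<integral>\<^sup>+x. ennreal (max (- f x) 0) \<partial>lborel)"
      by (simp add: ennreal_max_0)
    also have "\<dots> = ennreal (integral\<^sup>L lborel (\<lambda>x. max (- f x) 0))"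
      by (rule nn_integral_eq_integral[OF im]) auto
    finally show ?thesis .
  qed
  have p1: "integral\<^sup>L lborel (\<lambda>x. max (f x) 0) \<ge> 0" by (rule integral_nonneg_AE) auto
  have p2: "integral\<^sup>L lborel (\<lambda>x. max (- f x) 0) \<ge> 0" by (rule integral_nonneg_AE) auto
  have "integral\<^sup>L lborel (\<lambda>x. max (f x) 0) - integral\<^sup>L lborel (\<lambda>x. max (- f x) 0)
      = integral\<^sup>L lborel (\<lambda>x. max (f x) 0 - max (- f x) 0)"
    by (rule Bochner_Integration.integral_diff[OF ip im, symmetric])
  also have "(\<lambda>x. max (f x) 0 - max (- f x) 0) = f" by (auto simp: fun_eq_iff max_def)
  finally have d: "integral\<^sup>L lborel (\<lambda>x. max (f x) 0) - integral\<^sup>L lborel (\<lambda>x. max (- f x) 0) = integral\<^sup>L lborel f" .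
  show ?thesis unfolding e1 e2 using p1 p2 d by (simp add: enn2ereal_ennreal)
qed

lemma nd_mom0: "s > 0 \<Longrightarrow> has_bochner_integral lborel (normal_density 0 s) 1"
  using integrable_normal_density[of s 0] integral_normal_density[of s 0]
  by (metis has_bochner_integral_integrable)

lemma nd_mom1: "s > 0 \<Longrightarrow> has_bochner_integral lborel (\<lambda>t. normal_density 0 s t * t) 0"
  using normal_moment_nz_1[of s 0] by simp

lemma nd_mom2: "s > 0 \<Longrightarrow> has_bochner_integral lborel (\<lambda>t. normal_density 0 s t * t^2) (s^2)"
  using normal_moment_even[of s 0 1] by (simp add: power2_eq_square field_simps)

lemma nd_mom: 
  assumes "s > 0" "m \<le> 2"
  shows "has_bochner_integral lborel (\<lambda>t. normal_density 0 s t * t^m)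
     (if m = 0 then 1 else if m = 1 then 0 else s^2)"
proof -
  have "m = 0 \<or> m = 1 \<or> m = 2" using assms(2) by auto
  then show ?thesis using nd_mom0[OF assms(1)] nd_mom1[OF assms(1)] nd_mom2[OF assms(1)] by auto
qed

definition gprod :: "('n::finite \<Rightarrow> real) \<Rightarrow> real^'n \<Rightarrow> real" where
  "gprod s x = (\<Prod>i\<in>UNIV. normal_density 0 (s i) (x $ i))"

lemma gprod_pos: "(\<And>i. s i > 0) \<Longrightarrow> gprod s x > 0"
  unfolding gprod_def by (intro prod_pos) (auto intro: normal_density_pos)

lemma gprod_mom0:
  assumes "\<And>i. s i > 0"
  shows "has_bochner_integral lborel (gprod s) 1"
proof -
  have i: "integrable lborel (normal_density 0 (s i))" for i
    by (rule integrable.intros[OF nd_mom0[OF assms]])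
  have "integral\<^sup>L lborel (gprod s) = 1"
    unfolding gprod_def[abs_def] lborel_vec_prod(2)[OF i] using assms by simp
  moreover have "integrable lborel (gprod s)"
    unfolding gprod_def[abs_def] by (rule lborel_vec_prod(1)[OF i])
  ultimately show ?thesis by (simp add: has_bochner_integral_iff)
qed

lemma gprod_mom2:
  fixes s :: "'n::finite \<Rightarrow> real"
  assumes sp: "\<And>i. s i > 0"
  shows "has_bochner_integral lborel (\<lambda>x. gprod s x * (x $ j * x $ k)) (if j = k then (s j)^2 else 0)"
proof -
  define m where "m i = (if i = j then 1 else 0) + (if i = k then 1 else (0::nat))" for i
  define f where "f i t = normal_density 0 (s i) t * t ^ (m i)" for i t
  have m2: "m i \<le> 2" for i unfolding m_def by auto
  have hb: "has_bochner_integral lborel (f i) (if m i = 0 then 1 else if m i = 1 then 0 else (s i)^2)" for i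
    unfolding f_def[abs_def] by (rule nd_mom[OF sp m2])
  have fi: "integrable lborel (f i)" for i by (rule integrable.intros[OF hb])
  have pw: "gprod s x * (x $ j * x $ k) = (\<Prod>i\<in>UNIV. f i (x $ i))" for x :: "real^'n"
  proof -
    have a: "(\<Prod>i\<in>UNIV. (x $ i) ^ (if i = j then 1 else 0)) = x $ j"
      by (simp add: if_distrib[of "\<lambda>e. (x $ _) ^ e"] cong: if_cong)
    have b: "(\<Prod>i\<in>UNIV. (x $ i) ^ (if i = k then 1 else 0)) = x $ k"
      by (simp add: if_distrib[of "\<lambda>e. (x $ _) ^ e"] cong: if_cong)
    have "(\<Prod>i\<in>UNIV. f i (x $ i)) = gprod s x * (\<Prod>i\<in>UNIV. (x $ i) ^ (m i))"
      unfolding f_def gprod_def by (rule prod.distrib)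
    also have "(\<Prod>i\<in>UNIV. (x $ i) ^ (m i)) = (\<Prod>i\<in>UNIV. (x $ i) ^ (if i = j then 1 else 0)) *
        (\<Prod>i\<in>UNIV. (x $ i) ^ (if i = k then 1 else 0))"
      unfolding m_def power_add by (rule prod.distrib)
    finally show ?thesis using a b by simp
  qed
  have "integral\<^sup>L lborel (\<lambda>x. gprod s x * (x $ j * x $ k)) =
      (\<Prod>i\<in>UNIV. if m i = 0 then 1 else if m i = 1 then 0 else (s i)^2)"
    unfolding pw lborel_vec_prod(2)[OF fi]
    by (intro prod.cong refl has_bochner_integral_integral_eq[OF hb])
  also have "\<dots> = (if j = k then (s j)^2 else 0)"
  proof (cases "j = k")
    case True
    then have "(\<lambda>i. if m i = 0 then 1 else if m i = 1 then 0 else (s i)^2) = (\<lambda>i. if i = j then (s j)^2 else 1)"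
      by (auto simp: m_def fun_eq_iff)
    then have "(\<Prod>i\<in>UNIV. if m i = 0 then 1 else if m i = 1 then 0 else (s i)^2) =
       (\<Prod>i\<in>UNIV. if i = j then (s j)^2 else 1)" by (rule arg_cong)
    also have "\<dots> = (s j)^2" by (simp add: prod.delta)
    finally show ?thesis using True by simp
  next
    case False
    then have "m j = 1" by (simp add: m_def)
    then have "(\<Prod>i\<in>UNIV. if m i = 0 then 1 else if m i = 1 then 0 else (s i)^2) = 0"
      by (intro prod_zero) auto
    then show ?thesis using False by simp
  qed
  finally have "integral\<^sup>L lborel (\<lambda>x. gprod s x * (x $ j * x $ k)) = (if j = k then (s j)^2 else 0)" .
  moreover have "integrable lborel (\<lambda>x. gprod s x * (x $ j * x $ k))"
    unfolding pw by (rule lborel_vec_prod(1)[OF fi])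
  ultimately show ?thesis by (simp add: has_bochner_integral_iff)
qed

lemma ln_nd:
  assumes "\<sigma> > 0"
  shows "ln (normal_density 0 \<sigma> t) = - ln (2*pi)/2 - ln \<sigma> - t^2/(2*\<sigma>^2)"
proof -
  have e: "normal_density 0 \<sigma> t = exp (-(t^2)/(2*\<sigma>^2)) / sqrt (2*pi*\<sigma>^2)"
    by (simp add: normal_density_def)
  have "ln (normal_density 0 \<sigma> t) = -(t^2)/(2*\<sigma>^2) - ln (2*pi*\<sigma>^2)/2"
    unfolding e using assms by (simp add: ln_div ln_sqrt)
  also have "ln (2*pi*\<sigma>^2) = ln (2*pi) + 2 * ln \<sigma>" using assms by (simp add: ln_mult ln_realpow)
  finally show ?thesis by (simp add: field_simps)
qed

lemma quad_form_sum:
  fixes A :: "real^'n^'n"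
  shows "x \<bullet> (A *v x) = (\<Sum>j\<in>UNIV. \<Sum>k\<in>UNIV. A$j$k * (x$j * x$k))"
  by (simp add: inner_vec_def matrix_vector_mult_def sum_distrib_left mult.assoc mult.left_commute)

lemma ln_gauss:
  fixes S :: "real^'n^'n"
  assumes "det S > 0"
  shows "ln (gauss_density S x) = - (x \<bullet> (matrix_inv S *v x))/2 - (real CARD('n) * ln (2*pi) + ln (det S))/2"
proof -
  have p: "(2 * pi) ^ CARD('n) * det S > 0" using assms by simp
  have "ln (gauss_density S x) = - (x \<bullet> (matrix_inv S *v x))/2 - ln (sqrt ((2 * pi) ^ CARD('n) * det S))"
    unfolding gauss_density_def using p assms by (simp add: ln_div)
  also have "ln (sqrt ((2 * pi) ^ CARD('n) * det S)) = (real CARD('n) * ln (2*pi) + ln (det S))/2"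
    using p assms by (simp add: ln_sqrt ln_mult ln_realpow algebra_simps)
  finally show ?thesis .
qed

lemma gauss_pos: "det S > 0 \<Longrightarrow> gauss_density S x > 0"
  unfolding gauss_density_def by simp

lemma KL_gauss:
  fixes S :: "real^'n^'n" and s :: "'n \<Rightarrow> real"
  assumes dS: "det S > 0" and sp: "\<And>i. s i > 0"
  shows "KL_dens (gprod s) (gauss_density S) = ereal ((\<Sum>i\<in>UNIV. - ln (s i)) - real CARD('n)/2
      + (\<Sum>i\<in>UNIV. matrix_inv S $ i $ i * (s i)^2)/2 + ln (det S)/2)"
proof -
  define A where "A = matrix_inv S"
  define G where "G x = (\<Sum>i\<in>UNIV. (- ln (s i)) * gprod s x)
     + (\<Sum>i\<in>UNIV. (-(1/(2*(s i)^2))) * (gprod s x * (x$i * x$i)))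
     + (\<Sum>j\<in>UNIV. \<Sum>k\<in>UNIV. (A$j$k/2) * (gprod s x * (x$j * x$k)))
     + (ln (det S)/2) * gprod s x" for x
  have pw: "gprod s x * ln (gprod s x / gauss_density S x) = G x" for x
  proof -
    have q: "gprod s x > 0" using gprod_pos sp by blast
    have p: "gauss_density S x > 0" using gauss_pos dS by blast
    have lq: "ln (gprod s x) = (\<Sum>i\<in>UNIV. - ln (2*pi)/2 - ln (s i) - (x$i)^2/(2*(s i)^2))"
      unfolding gprod_def using sp
      by (subst ln_prod) (auto simp: ln_nd normal_density_pos less_imp_neq[symmetric])
    have "ln (gprod s x / gauss_density S x) = ln (gprod s x) - ln (gauss_density S x)"
      using p q by (simp add: ln_div)
    also have "\<dots> = (\<Sum>i\<in>UNIV. - ln (s i)) + (\<Sum>i\<in>UNIV. (-(1/(2*(s i)^2))) * (x$i * x$i))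
        + (\<Sum>j\<in>UNIV. \<Sum>k\<in>UNIV. (A$j$k/2) * (x$j * x$k)) + ln (det S)/2"
    proof -
      have a: "(\<Sum>i\<in>UNIV. - ln (2*pi)/2 - ln (s i) - (x$i)^2/(2*(s i)^2)) =
          - real CARD('n) * ln (2*pi)/2 + (\<Sum>i\<in>UNIV. - ln (s i)) + (\<Sum>i\<in>UNIV. (-(1/(2*(s i)^2))) * (x$i * x$i))"
        by (simp add: sum.distrib sum_subtractf sum_negf power2_eq_square)
      have b: "(\<Sum>j\<in>UNIV. \<Sum>k\<in>UNIV. (A$j$k/2) * (x$j * x$k)) = (x \<bullet> (A *v x))/2"
      proof -
        have "(\<Sum>j\<in>UNIV. \<Sum>k\<in>UNIV. (A$j$k/2) * (x$j * x$k)) = (\<Sum>j\<in>UNIV. \<Sum>k\<in>UNIV. (A$j$k * (x$j * x$k))/2)"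
          by (intro sum.cong refl) simp
        also have "\<dots> = (\<Sum>j\<in>UNIV. \<Sum>k\<in>UNIV. A$j$k * (x$j * x$k))/2"
          by (simp only: sum_divide_distrib)
        finally show ?thesis by (simp only: quad_form_sum)
      qed
      have "ln (gprod s x) - ln (gauss_density S x) = (\<Sum>i\<in>UNIV. - ln (s i)) + (\<Sum>i\<in>UNIV. (-(1/(2*(s i)^2))) * (x$i * x$i))
        + (x \<bullet> (A *v x))/2 + ln (det S)/2"
        unfolding lq ln_gauss[OF dS] a A_def by (simp add: field_simps)
      then show ?thesis by (simp only: b)
    qed
    finally show ?thesis unfolding G_def
      by (simp add: distrib_left sum_distrib_left mult.assoc mult.left_commute; simp add: mult.commute)
  qed
  define V where "V = (\<Sum>i\<in>UNIV. (- ln (s i)) * 1)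
     + (\<Sum>i\<in>UNIV. (-(1/(2*(s i)^2))) * (if i = i then (s i)^2 else 0))
     + (\<Sum>j\<in>UNIV. \<Sum>k\<in>UNIV. (A$j$k/2) * (if j = k then (s j)^2 else 0))
     + (ln (det S)/2) * 1"
  have hb: "has_bochner_integral lborel G V"
    unfolding G_def[abs_def] V_def
    by (intro has_bochner_integral_add has_bochner_integral_sum has_bochner_integral_mult_right
        gprod_mom0 gprod_mom2 sp)
  have V: "V = (\<Sum>i\<in>UNIV. - ln (s i)) - real CARD('n)/2
      + (\<Sum>i\<in>UNIV. A $ i $ i * (s i)^2)/2 + ln (det S)/2"
  proof -
    have "(\<Sum>i\<in>UNIV. (-(1/(2*(s i)^2))) * (if i = i then (s i)^2 else 0)) = (\<Sum>i\<in>(UNIV::'n set). - 1/2)"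
    proof (rule sum.cong[OF refl])
      fix i :: 'n
      have "s i \<noteq> 0" using sp[of i] by simp
      then show "(-(1/(2*(s i)^2))) * (if i = i then (s i)^2 else 0) = - 1/2"
        by (simp add: field_simps)
    qed
    moreover have "(\<Sum>j\<in>UNIV. \<Sum>k\<in>UNIV. (A$j$k/2) * (if j = k then (s j)^2 else 0)) =
        (\<Sum>j\<in>UNIV. A $ j $ j * (s j)^2 / 2)"
      by (simp add: if_distrib[of "\<lambda>v. _ * v"] cong: if_cong)
    ultimately show ?thesis unfolding V_def by (simp add: sum_divide_distrib)
  qed
  have "KL_dens (gprod s) (gauss_density S) =
      enn2ereal (\<integral>\<^sup>+x. ennreal (G x) \<partial>lborel) - enn2ereal (\<integral>\<^sup>+x. ennreal (- G x) \<partial>lborel)"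
    unfolding KL_dens_def pw ..
  also have "\<dots> = ereal (integral\<^sup>L lborel G)"
    by (rule KL_int) (rule integrable.intros[OF hb])
  also have "integral\<^sup>L lborel G = V" using hb by (rule has_bochner_integral_integral_eq)
  finally show ?thesis unfolding V A_def .
qed

lemma nd_deriv:
  assumes "\<sigma> > 0"
  shows "(normal_density 0 \<sigma> has_real_derivative (normal_density 0 \<sigma> t * (-t/\<sigma>^2))) (at t)"
proof -
  have "((\<lambda>t. 1 / sqrt (2 * pi * \<sigma>\<^sup>2) * exp (-(t - 0)\<^sup>2/ (2 * \<sigma>\<^sup>2))) has_real_derivative
     1 / sqrt (2 * pi * \<sigma>\<^sup>2) * (exp (-(t - 0)\<^sup>2/ (2 * \<sigma>\<^sup>2)) * (-(2 * t) / (2 * \<sigma>\<^sup>2)))) (at t)"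
    using assms by (auto intro!: derivative_eq_intros simp: power2_eq_square field_simps)
  moreover have "1 / sqrt (2 * pi * \<sigma>\<^sup>2) * (exp (-(t - 0)\<^sup>2/ (2 * \<sigma>\<^sup>2)) * (-(2 * t) / (2 * \<sigma>\<^sup>2)))
     = normal_density 0 \<sigma> t * (-t/\<sigma>^2)"
    using assms unfolding normal_density_def by (simp add: field_simps)
  ultimately show ?thesis unfolding normal_density_def[abs_def] by simp
qed
lemma nd_C1:
  assumes "\<sigma> > 0"
  shows "normal_density 0 \<sigma> C1_differentiable_on UNIV"
  unfolding C1_differentiable_on_def
proof (intro exI conjI ballI)
  fix v :: real
  show "(normal_density 0 \<sigma> has_vector_derivative (normal_density 0 \<sigma> v * (-v/\<sigma>^2))) (at v)"
    using nd_deriv[OF assms] has_real_derivative_iff_has_vector_derivative by blast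
next
  show "continuous_on UNIV (\<lambda>v. normal_density 0 \<sigma> v * (-v/\<sigma>^2))"
    using assms unfolding normal_density_def by (intro continuous_intros) auto
qed

lemma gprod_in_prod_densities:
  fixes s :: "'n::finite \<Rightarrow> real"
  assumes sp: "\<And>i. s i > 0"
  shows "gprod s \<in> prod_densities"
  unfolding prod_densities_def
proof (intro CollectI exI[of _ "\<lambda>i. normal_density 0 (s i)"] conjI)
  show "\<forall>i. (\<forall>t. 0 < normal_density 0 (s i) t) \<and> normal_density 0 (s i) C1_differentiable_on UNIV \<and>
      normal_density 0 (s i) \<in> borel_measurable borel \<and>
      (\<integral>\<^sup>+ t. ennreal (normal_density 0 (s i) t) \<partial>lborel) = 1"
  proof (rule allI, intro conjI)
    fix i :: 'n
    show "\<forall>t. 0 < normal_density 0 (s i) t" using sp by (simp add: normal_density_pos)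
    show "normal_density 0 (s i) C1_differentiable_on UNIV" by (rule nd_C1[OF sp])
    show "normal_density 0 (s i) \<in> borel_measurable borel" by simp
    have "(\<integral>\<^sup>+ t. ennreal (normal_density 0 (s i) t) \<partial>lborel) = ennreal (integral\<^sup>L lborel (normal_density 0 (s i)))"
      by (rule nn_integral_eq_integral) (auto intro: integrable.intros[OF nd_mom0[OF sp]])
    also have "integral\<^sup>L lborel (normal_density 0 (s i)) = 1"
      by (rule has_bochner_integral_integral_eq[OF nd_mom0[OF sp]])
    finally show "(\<integral>\<^sup>+ t. ennreal (normal_density 0 (s i) t) \<partial>lborel) = 1" by simp
  qed
  show "\<forall>x. gprod s x = (\<Prod>i\<in>UNIV. normal_density 0 (s i) (x $ i))" by (simp add: gprod_def)
qed



lemma ln_upper: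
  fixes y L :: real
  assumes y: "0 < y" "y \<le> L" and L: "1 \<le> L"
  shows "ln y \<le> (y - 1) - (y - 1)^2 / (2 * L^2)"
proof -
  define \<phi> where "\<phi> t = (t - 1) - (t - 1)^2 / (2 * L^2) - ln t" for t :: real
  have Lp: "L > 0" using L by simp
  have der: "DERIV \<phi> t :> ((t - 1) * (1/t - 1/L^2))" if "t > 0" for t
  proof -
    have "DERIV \<phi> t :> (1 - 2 * (t - 1) / (2 * L^2) - 1/t)"
      unfolding \<phi>_def using that Lp
      by (auto intro!: derivative_eq_intros simp: power2_eq_square field_simps)
    moreover have "1 - 2 * (t - 1) / (2 * L^2) - 1/t = (t - 1) * (1/t - 1/L^2)"
      using that Lp by (simp add: field_simps power2_eq_square)
    ultimately show ?thesis by simp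
  qed
  have "\<phi> 1 = 0" unfolding \<phi>_def by simp
  have "0 \<le> \<phi> y"
  proof (cases "y \<le> 1")
    case True
    have "\<phi> 1 \<le> \<phi> y"
    proof (rule DERIV_nonpos_imp_nonincreasing[of y 1 \<phi>, OF True])
      fix t assume t: "y \<le> t" "t \<le> 1"
      then have tp: "t > 0" using y by simp
      have "1/L^2 \<le> 1" using L by (simp add: power_le_one_iff field_simps one_le_power)
      moreover have "1 \<le> 1/t" using t tp by simp
      ultimately have "(t - 1) * (1/t - 1/L^2) \<le> 0" using t by (intro mult_nonpos_nonneg) auto
      then show "\<exists>y. DERIV \<phi> t :> y \<and> y \<le> 0" using der[OF tp] by blast
    qed
    then show ?thesis using \<open>\<phi> 1 = 0\<close> by simp
  next
    case False
    have "\<phi> 1 \<le> \<phi> y"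
    proof (rule DERIV_nonneg_imp_nondecreasing[of 1 y \<phi>])
      show "1 \<le> y" using False by simp
      fix t assume t: "1 \<le> t" "t \<le> y"
      then have tp: "t > 0" by simp
      have "1/L \<le> 1/t" using t y tp by (simp add: frac_le)
      moreover have "1/L^2 \<le> 1/L" using L by (simp add: power2_eq_square field_simps)
      ultimately have "(t - 1) * (1/t - 1/L^2) \<ge> 0" using t by (intro mult_nonneg_nonneg) auto
      then show "\<exists>y. DERIV \<phi> t :> y \<and> y \<ge> 0" using der[OF tp] by blast
    qed
    then show ?thesis using \<open>\<phi> 1 = 0\<close> by simp
  qed
  then show ?thesis unfolding \<phi>_def by simp
qed

lemma ln_lower:
  fixes y l :: real
  assumes y: "l \<le> y" and l: "0 < l" "l \<le> 1"
  shows "(y - 1) - (y - 1)^2 / (2 * l^2) \<le> ln y"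
proof -
  define \<psi> where "\<psi> t = ln t - (t - 1) + (t - 1)^2 / (2 * l^2)" for t :: real
  have der: "DERIV \<psi> t :> ((t - 1) * (1/l^2 - 1/t))" if "t > 0" for t
  proof -
    have "DERIV \<psi> t :> (1/t - 1 + 2 * (t - 1) / (2 * l^2))"
      unfolding \<psi>_def using that l
      by (auto intro!: derivative_eq_intros simp: power2_eq_square field_simps)
    moreover have "1/t - 1 + 2 * (t - 1) / (2 * l^2) = (t - 1) * (1/l^2 - 1/t)"
      using that l by (simp add: field_simps power2_eq_square)
    ultimately show ?thesis by simp
  qed
  have "\<psi> 1 = 0" unfolding \<psi>_def by simp
  have "0 \<le> \<psi> y"
  proof (cases "y \<le> 1")
    case True
    have "\<psi> 1 \<le> \<psi> y"
    proof (rule DERIV_nonpos_imp_nonincreasing[of y 1 \<psi>, OF True])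
      fix t assume t: "y \<le> t" "t \<le> 1"
      then have tp: "t > 0" using y l by simp
      have "1/t \<le> 1/l" using t y l by (simp add: frac_le)
      moreover have "1/l \<le> 1/l^2" using l by (simp add: power2_eq_square field_simps)
      ultimately have "(t - 1) * (1/l^2 - 1/t) \<le> 0" using t by (intro mult_nonpos_nonneg) auto
      then show "\<exists>y. DERIV \<psi> t :> y \<and> y \<le> 0" using der[OF tp] by blast
    qed
    then show ?thesis using \<open>\<psi> 1 = 0\<close> by simp
  next
    case False
    have "\<psi> 1 \<le> \<psi> y"
    proof (rule DERIV_nonneg_imp_nondecreasing[of 1 y \<psi>])
      show "1 \<le> y" using False by simp
      fix t assume t: "1 \<le> t" "t \<le> y"
      then have tp: "t > 0" by simp
      have "1/t \<le> 1" using t by simp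
      moreover have "1 \<le> 1/l^2" using l by (simp add: power_le_one field_simps)
      ultimately have "1/l^2 - 1/t \<ge> 0" by linarith
      then have "(t - 1) * (1/l^2 - 1/t) \<ge> 0" using t by (intro mult_nonneg_nonneg) auto
      then show "\<exists>y. DERIV \<psi> t :> y \<and> y \<ge> 0" using der[OF tp] by blast
    qed
    then show ?thesis using \<open>\<psi> 1 = 0\<close> by simp
  qed
  then show ?thesis unfolding \<psi>_def by simp
qed



lemma frob_xf:
  fixes R C :: "real^'n^'n"
  assumes oR: "orthogonal_matrix R" and sym: "transpose C = C"
  shows "(\<Sum>i\<in>UNIV. \<Sum>k\<in>UNIV. (xf C R i k)^2) = (\<Sum>j\<in>UNIV. \<Sum>l\<in>UNIV. (C $ j $ l)^2)"
proof -
  define X where "X = R ** C ** transpose R"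
  have Xe: "X $ i $ k = xf C R i k" for i k unfolding X_def by (rule conj_entry)
  have "transpose X = X" unfolding X_def transpose_conj sym ..
  then have "(\<Sum>i\<in>UNIV. \<Sum>k\<in>UNIV. (xf C R i k)^2) = trace (X ** X)"
    using frob_trace[of X] by (simp add: Xe)
  also have "X ** X = R ** (C ** C) ** transpose R" unfolding X_def by (rule conj_mult[OF oR])
  also have "trace \<dots> = trace (transpose C ** C)" using trace_conj[OF oR] sym by simp
  also have "\<dots> = (\<Sum>j\<in>UNIV. \<Sum>l\<in>UNIV. (C $ j $ l)^2)" unfolding frob_trace ..
  finally show ?thesis .
qed

lemma diag_le_frob:
  "(\<Sum>i\<in>UNIV. (xf C R i i)^2) \<le> (\<Sum>i\<in>UNIV. \<Sum>k\<in>UNIV. (xf C R i k)^2)"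
  by (intro sum_mono member_le_sum) auto

lemma trace_xf:
  fixes R C :: "real^'n^'n"
  assumes oR: "orthogonal_matrix R"
  shows "(\<Sum>i\<in>UNIV. xf C R i i) = trace C"
proof -
  have "(\<Sum>i\<in>UNIV. xf C R i i) = trace (R ** C ** transpose R)"
    unfolding trace_def conj_entry ..
  also have "\<dots> = trace C" by (rule trace_conj[OF oR])
  finally show ?thesis .
qed

lemma xf_diff_id: "xf (A - mat 1) R i i = xf A R i i - R $ i \<bullet> R $ i"
  unfolding xf_def by (simp add: matrix_vector_mult_diff_rdistrib inner_diff_right)

lemma gauss_id: "gauss_density (mat 1 :: real^'n^'n) = gprod (\<lambda>_. 1)"
proof
  fix x :: "real^'n"
  have mi: "matrix_inv (mat 1 :: real^'n^'n) = mat 1" by (rule matrix_inv_eq) simp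
  have "gauss_density (mat 1 :: real^'n^'n) x = exp (- (\<Sum>i\<in>UNIV. (x $ i)^2) / 2) / sqrt ((2 * pi) ^ CARD('n))"
    unfolding gauss_density_def mi by (simp add: sum_sq_vec)
  also have "\<dots> = (\<Prod>i\<in>UNIV. exp (-((x $ i)^2) / 2) / sqrt (2 * pi))"
  proof -
    have "exp (- (\<Sum>i\<in>UNIV. (x $ i)^2) / 2) = (\<Prod>i\<in>UNIV. exp (-((x $ i)^2) / 2))"
      by (simp add: exp_sum[symmetric] sum_negf sum_divide_distrib)
    moreover have "sqrt ((2 * pi) ^ CARD('n)) = (\<Prod>i\<in>(UNIV::'n set). sqrt (2 * pi))"
      by (simp only: real_sqrt_power prod_constant)
    ultimately show ?thesis by (simp add: prod_dividef)
  qed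
  also have "\<dots> = gprod (\<lambda>_. 1) x"
    unfolding gprod_def normal_density_def by (intro prod.cong refl) simp
  finally show "gauss_density (mat 1 :: real^'n^'n) x = gprod (\<lambda>_. 1) x" .
qed

lemma mm_diff_left: "(A::real^'n^'n) ** (B - C) = A ** B - A ** C"
  by (simp add: vec_eq_iff matrix_matrix_mult_def sum_subtractf right_diff_distrib)

lemma mm_diff_right: "((B::real^'n^'n) - C) ** A = B ** A - C ** A"
  by (simp add: vec_eq_iff matrix_matrix_mult_def sum_subtractf left_diff_distrib)

theorem theorem4:
  fixes Sigma :: "real^'n^'n" and M :: "(real^'n^'n) measure"
  assumes "sym_pos_def Sigma"
    and "\<forall>i. matrix_inv Sigma $ i $ i = 1"
    and "haar_orthogonal M"
  shows "enn2ereal (\<integral>\<^sup>+ R. e2ennreal (INF q\<in>prod_densities.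
              KL_dens q (gauss_density (R ** Sigma ** transpose R))) \<partial>M)
         \<le> ereal (1 - 2 / ((real CARD('n) + 2) * (cond_number Sigma)\<^sup>2))
           * KL_dens (gauss_density (mat 1 :: real^'n^'n)) (gauss_density Sigma)"
proof -
  note spd = assms(1) and diag = assms(2) and H = assms(3)
  interpret prob_space M using haar_facts(1)[OF H] .
  obtain P \<mu> where oP: "orthogonal_matrix P" and mpos: "\<And>j. \<mu> j > 0"
    and SP: "Sigma = P ** dmat \<mu> ** transpose P"
    and AP0: "matrix_inv Sigma = P ** dmat (\<lambda>j. 1 / \<mu> j) ** transpose P"
    using spd_decomp[OF spd] by blast
  define A where "A = matrix_inv Sigma"
  define lam where "lam = (\<lambda>j. 1 / \<mu> j)"
  have AP: "A = P ** dmat lam ** transpose P" unfolding A_def lam_def by (rule AP0)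
  have lpos: "lam j > 0" for j using mpos[of j] by (simp add: lam_def)
  define d where "d = real CARD('n)"
  have dpos: "d > 0" unfolding d_def by simp
  define mx where "mx = Max (range \<mu>)"
  define mn where "mn = Min (range \<mu>)"
  have fin: "finite (range \<mu>)" by simp
  have mxge: "\<mu> j \<le> mx" for j unfolding mx_def using fin by (intro Max_ge) auto
  have mnle: "mn \<le> \<mu> j" for j unfolding mn_def using fin by (intro Min_le) auto
  have mnin: "mn \<in> range \<mu>" unfolding mn_def using fin by (intro Min_in) auto
  have mnpos: "mn > 0" using mnin mpos by auto
  have mxpos: "mx > 0" using mxge[of undefined] mpos[of undefined] by linarith
  define L where "L = 1 / mn"
  define l where "l = 1 / mx"
  have Lpos: "L > 0" and lposl: "l > 0" unfolding L_def l_def using mnpos mxpos by auto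
  have lamL: "lam j \<le> L" for j unfolding lam_def L_def using mnle[of j] mnpos by (simp add: frac_le)
  have laml: "l \<le> lam j" for j unfolding lam_def l_def using mxge[of j] mpos[of j] by (simp add: frac_le)
  have cn: "cond_number Sigma = L / l"
    unfolding cond_number_def eigenvalues_decomp[OF oP SP] L_def l_def mx_def[symmetric] mn_def[symmetric]
    by simp
  have trA: "(\<Sum>j\<in>UNIV. lam j) = d"
  proof -
    have "trace A = d" unfolding trace_def A_def d_def using diag by simp
    moreover have "trace A = (\<Sum>j\<in>UNIV. lam j)" unfolding AP trace_conj[OF oP] trace_dmat ..
    ultimately show ?thesis by simp
  qed
  have L1: "1 \<le> L"
  proof -
    have "d \<le> d * L" using sum_mono[of UNIV lam "\<lambda>_. L", OF lamL] trA by (simp add: d_def mult.commute)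
    then show ?thesis using dpos by simp
  qed
  have l1: "l \<le> 1"
  proof -
    have "d * l \<le> d" using sum_mono[of UNIV "\<lambda>_. l" lam, OF laml] trA by (simp add: d_def mult.commute)
    then show ?thesis using dpos by simp
  qed
  have detS: "det Sigma = prod \<mu> UNIV" unfolding SP det_conj[OF oP] det_dmat ..
  have detpos: "det Sigma > 0" unfolding detS using mpos by (simp add: prod_pos)
  define K where "K = ln (det Sigma) / 2"
  have lnK: "2 * K = - (\<Sum>j\<in>UNIV. ln (lam j))"
  proof -
    have "ln (det Sigma) = (\<Sum>j\<in>UNIV. ln (\<mu> j))" unfolding detS
      using mpos by (subst ln_prod) (auto simp: less_imp_neq[symmetric])
    also have "\<dots> = - (\<Sum>j\<in>UNIV. ln (lam j))"
      using mpos by (simp add: lam_def ln_div sum_negf less_imp_neq[symmetric])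
    finally show ?thesis unfolding K_def by simp
  qed
  define C where "C = A - mat 1"
  have CP: "C = P ** dmat (\<lambda>j. lam j - 1) ** transpose P"
  proof -
    have "mat 1 = P ** dmat (\<lambda>_. 1) ** transpose P" using orth_PPt[OF oP] by (simp add: dmat_one)
    then have "C = P ** dmat lam ** transpose P - P ** dmat (\<lambda>_. 1) ** transpose P"
      unfolding C_def AP by simp
    also have "\<dots> = P ** dmat (\<lambda>j. lam j - 1) ** transpose P"
      by (simp only: dmat_diff[symmetric] mm_diff_left mm_diff_right)
    finally show ?thesis .
  qed
  have symC: "transpose C = C" unfolding CP transpose_conj transpose_dmat ..
  have trC: "trace C = 0" unfolding CP trace_conj[OF oP] trace_dmat
    using trA by (simp add: sum_subtractf d_def)
  define F where "F = (\<Sum>j\<in>UNIV. \<Sum>l\<in>UNIV. (C $ j $ l)^2)"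
  have F_eq: "F = (\<Sum>j\<in>UNIV. (lam j - 1)^2)" unfolding F_def CP by (rule frob_conj_dmat[OF oP])
  have keyl: "- (\<Sum>j\<in>UNIV. ln (lam j)) \<le> F / (2 * l^2)"
  proof -
    have "(\<Sum>j\<in>UNIV. (lam j - 1) - (lam j - 1)^2 / (2 * l^2)) \<le> (\<Sum>j\<in>UNIV. ln (lam j))"
      by (intro sum_mono ln_lower laml lposl l1)
    moreover have "(\<Sum>j\<in>UNIV. (lam j - 1) - (lam j - 1)^2 / (2 * l^2)) = - F / (2 * l^2)"
      unfolding F_eq using trA by (simp add: sum_subtractf sum_divide_distrib d_def)
    ultimately show ?thesis by simp
  qed
  have keyu: "F / (2 * L^2) \<le> - (\<Sum>j\<in>UNIV. ln (lam j))"
  proof -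
    have "(\<Sum>j\<in>UNIV. ln (lam j)) \<le> (\<Sum>j\<in>UNIV. (lam j - 1) - (lam j - 1)^2 / (2 * L^2))"
      by (intro sum_mono ln_upper lpos lamL L1)
    moreover have "(\<Sum>j\<in>UNIV. (lam j - 1) - (lam j - 1)^2 / (2 * L^2)) = - F / (2 * L^2)"
      unfolding F_eq using trA by (simp add: sum_subtractf sum_divide_distrib d_def)
    ultimately show ?thesis by simp
  qed
  have SA: "Sigma ** A = mat 1"
  proof -
    have "Sigma ** A = P ** (dmat \<mu> ** dmat lam) ** transpose P" unfolding SP AP by (rule conj_mult[OF oP])
    also have "dmat \<mu> ** dmat lam = mat 1"
      unfolding dmat_mult lam_def using mpos by (simp add: less_imp_neq[symmetric] dmat_one)
    finally show ?thesis using orth_PPt[OF oP] by simp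
  qed
  have K_nonneg: "F / (4 * L^2) \<le> K"
  proof -
    have "F / (4 * L^2) = (F / (2 * L^2)) / 2" by simp
    also have "\<dots> \<le> (- (\<Sum>j\<in>UNIV. ln (lam j))) / 2" using keyu by (intro divide_right_mono) auto
    also have "\<dots> = K" using lnK by simp
    finally show ?thesis .
  qed
  have F0: "F \<ge> 0" unfolding F_def by (intro sum_nonneg) auto
  define g where "g R = K - (1 / (4 * L^2)) * (\<Sum>i\<in>UNIV. (xf C R i i)^2)" for R
  have pointwise: "e2ennreal (INF q\<in>prod_densities. KL_dens q (gauss_density (R ** Sigma ** transpose R)))
      \<le> ennreal (g R) \<and> 0 \<le> g R" if oR: "orthogonal_matrix R" for R
  proof -
    define y where "y i = xf A R i i" for i
    have ybd: "l \<le> y i \<and> y i \<le> L" for i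
    proof -
      define w where "w = transpose P *v (R $ i)"
      have ww: "(\<Sum>j\<in>UNIV. (w $ j)^2) = 1"
        using norm_orth_vec[OF oP, of "R $ i"] orth_row_norm[OF oR, of i] unfolding w_def sum_sq_vec by simp
      have yw: "y i = (\<Sum>j\<in>UNIV. lam j * (w $ j)^2)"
        unfolding y_def xf_def AP quad_conj w_def[symmetric] dmat_quad ..
      have "(\<Sum>j\<in>UNIV. lam j * (w $ j)^2) \<le> (\<Sum>j\<in>UNIV. L * (w $ j)^2)"
        by (intro sum_mono mult_right_mono lamL) auto
      moreover have "(\<Sum>j\<in>UNIV. l * (w $ j)^2) \<le> (\<Sum>j\<in>UNIV. lam j * (w $ j)^2)"
        by (intro sum_mono mult_right_mono laml) auto
      ultimately show ?thesis unfolding yw using ww by (simp add: sum_distrib_left[symmetric])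
    qed
    have ypos: "y i > 0" for i using ybd[of i] lposl by linarith
    define s where "s i = 1 / sqrt (y i)" for i
    have spos: "s i > 0" for i using ypos[of i] by (simp add: s_def)
    have detR: "det (R ** Sigma ** transpose R) = det Sigma" by (rule det_conj[OF oR])
    have invR: "matrix_inv (R ** Sigma ** transpose R) = R ** A ** transpose R"
    proof (rule matrix_inv_eq)
      show "(R ** Sigma ** transpose R) ** (R ** A ** transpose R) = mat 1"
        unfolding conj_mult[OF oR] SA using orth_PPt[OF oR] by simp
    qed
    define f where "f = (\<Sum>i\<in>UNIV. ln (y i) / 2) + K"
    have KLR: "KL_dens (gprod s) (gauss_density (R ** Sigma ** transpose R)) = ereal f"
    proof -
      have "KL_dens (gprod s) (gauss_density (R ** Sigma ** transpose R)) =
         ereal ((\<Sum>i\<in>UNIV. - ln (s i)) - real CARD('n)/2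
      + (\<Sum>i\<in>UNIV. matrix_inv (R ** Sigma ** transpose R) $ i $ i * (s i)^2)/2 + ln (det (R ** Sigma ** transpose R))/2)"
        by (rule KL_gauss) (use detR detpos spos in auto)
      also have "(\<Sum>i\<in>UNIV. - ln (s i)) = (\<Sum>i\<in>UNIV. ln (y i) / 2)"
      proof (intro sum.cong refl)
        fix i
        have yi: "0 < y i" by (rule ypos)
        then have "ln (sqrt (y i)) = ln (y i) / 2" by (simp add: ln_sqrt)
        then show "- ln (s i) = ln (y i) / 2" using yi by (simp add: s_def ln_div)
      qed
      also have "(\<Sum>i\<in>UNIV. matrix_inv (R ** Sigma ** transpose R) $ i $ i * (s i)^2) = real CARD('n)"
      proof -
        have "matrix_inv (R ** Sigma ** transpose R) $ i $ i * (s i)^2 = 1" for i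
          unfolding invR conj_entry using ypos[of i] by (simp add: s_def y_def power_divide)
        then show ?thesis by simp
      qed
      finally show ?thesis unfolding detR f_def K_def by simp
    qed
    have mem: "gprod s \<in> prod_densities" by (rule gprod_in_prod_densities[OF spos])
    have xy: "xf C R i i = y i - 1" for i
      unfolding C_def xf_diff_id y_def using orth_row_norm[OF oR, of i] by simp
    have sumx: "(\<Sum>i\<in>UNIV. xf C R i i) = 0" using trace_xf[OF oR, of C] trC by simp
    have fg: "f \<le> g R"
    proof -
      have "(\<Sum>i\<in>UNIV. ln (y i) / 2) \<le> (\<Sum>i\<in>UNIV. ((y i - 1) - (y i - 1)^2 / (2 * L^2)) / 2)"
        using ypos ybd L1 by (intro sum_mono divide_right_mono ln_upper) auto
      also have "\<dots> = (\<Sum>i\<in>UNIV. xf C R i i) / 2 - (1 / (4 * L^2)) * (\<Sum>i\<in>UNIV. (xf C R i i)^2)"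
      proof -
        have eqs: "((y i - 1) - (y i - 1)^2 / (2 * L^2)) / 2 = xf C R i i / 2 - (1 / (4 * L^2)) * (xf C R i i)^2" for i
          unfolding xy using Lpos by (simp add: field_simps power2_eq_square)
        have "(\<Sum>i\<in>UNIV. ((y i - 1) - (y i - 1)^2 / (2 * L^2)) / 2) =
            (\<Sum>i\<in>UNIV. xf C R i i / 2 - (1 / (4 * L^2)) * (xf C R i i)^2)"
          by (rule sum.cong[OF refl eqs])
        also have "\<dots> = (\<Sum>i\<in>UNIV. xf C R i i) / 2 - (1 / (4 * L^2)) * (\<Sum>i\<in>UNIV. (xf C R i i)^2)"
          by (simp only: sum_subtractf sum_divide_distrib sum_distrib_left)
        finally show ?thesis .
      qed
      finally show ?thesis unfolding f_def g_def sumx by simp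
    qed
    have g0: "0 \<le> g R"
    proof -
      have "(\<Sum>i\<in>UNIV. (xf C R i i)^2) \<le> F"
        using diag_le_frob[of C R] frob_xf[OF oR symC] unfolding F_def by simp
      then have "(1 / (4 * L^2)) * (\<Sum>i\<in>UNIV. (xf C R i i)^2) \<le> F / (4 * L^2)"
        using Lpos by (simp add: divide_right_mono)
      then show ?thesis unfolding g_def using K_nonneg by simp
    qed
    have "(INF q\<in>prod_densities. KL_dens q (gauss_density (R ** Sigma ** transpose R))) \<le> ereal f"
      using INF_lower[OF mem, of "\<lambda>q. KL_dens q (gauss_density (R ** Sigma ** transpose R))"] KLR by simp
    then have "e2ennreal (INF q\<in>prod_densities. KL_dens q (gauss_density (R ** Sigma ** transpose R))) \<le> ennreal f"
      using e2ennreal_mono by fastforce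
    also have "ennreal f \<le> ennreal (g R)" using fg by (rule ennreal_leI)
    finally show ?thesis using g0 by simp
  qed
  have cg: "continuous_on UNIV g" unfolding g_def by (intro continuous_intros xf_cont)
  have ig: "integrable M g" by (rule haar_integrable[OF H cg])
  have Ig: "integral\<^sup>L M g = K - (1 / (4 * L^2)) * (2 * F / (d + 2))"
  proof -
    have iP: "integrable M (\<lambda>R. \<Sum>i\<in>UNIV. (xf C R i i)^2)"
      by (rule haar_integrable[OF H]) (intro continuous_intros xf_cont)
    have "integral\<^sup>L M g = K - (1 / (4 * L^2)) * integral\<^sup>L M (\<lambda>R. \<Sum>i\<in>UNIV. (xf C R i i)^2)"
      unfolding g_def using iP by (simp add: prob_space)
    also have "integral\<^sup>L M (\<lambda>R. \<Sum>i\<in>UNIV. (xf C R i i)^2) = 2 * F / (d + 2)"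
      unfolding F_def d_def by (rule haar_moment[OF H symC trC])
    finally show ?thesis .
  qed
  have AEo: "AE R in M. orthogonal_matrix R" by (rule haar_facts(4)[OF H])
  have step1: "(\<integral>\<^sup>+ R. e2ennreal (INF q\<in>prod_densities.
              KL_dens q (gauss_density (R ** Sigma ** transpose R))) \<partial>M) \<le> (\<integral>\<^sup>+ R. ennreal (g R) \<partial>M)"
    by (rule nn_integral_mono_AE) (use AEo pointwise in \<open>auto elim!: AE_mp\<close>)
  have step2: "(\<integral>\<^sup>+ R. ennreal (g R) \<partial>M) = ennreal (integral\<^sup>L M g)"
    by (rule nn_integral_eq_integral[OF ig]) (use AEo pointwise in \<open>auto elim!: AE_mp\<close>)
  have Ig0: "integral\<^sup>L M g \<ge> 0"
    by (rule integral_nonneg_AE) (use AEo pointwise in \<open>auto elim!: AE_mp\<close>)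
  have RHS: "KL_dens (gauss_density (mat 1 :: real^'n^'n)) (gauss_density Sigma) = ereal K"
  proof -
    have "KL_dens (gprod (\<lambda>_::'n. 1)) (gauss_density Sigma) =
        ereal (- real CARD('n)/2 + (\<Sum>i\<in>UNIV. matrix_inv Sigma $ i $ i)/2 + ln (det Sigma)/2)"
      using KL_gauss[OF detpos, of "\<lambda>_::'n. 1"] by simp
    then show ?thesis unfolding gauss_id K_def using diag by simp
  qed
  have final: "integral\<^sup>L M g \<le> (1 - 2 / ((real CARD('n) + 2) * (cond_number Sigma)\<^sup>2)) * K"
  proof -
    have kk: "4 * K * l^2 \<le> F"
    proof -
      have "2 * K \<le> F / (2 * l^2)" using keyl lnK by simp
      then have "2 * K * (2 * l^2) \<le> F / (2 * l^2) * (2 * l^2)"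
        using lposl by (intro mult_right_mono) auto
      then show ?thesis using lposl by (simp add: field_simps)
    qed
    have e1: "2 / ((d + 2) * (L / l)^2) * K = (4 * K * l^2) / (2 * (d + 2) * L^2)"
    proof -
      define D where "D = d + 2"
      have Dp: "D > 0" using dpos by (simp add: D_def)
      have "2 / (D * (L / l)^2) * K = (4 * K * l^2) / (2 * D * L^2)"
        using lposl Lpos Dp by (simp add: field_simps power2_eq_square)
      then show ?thesis unfolding D_def .
    qed
    have e2: "(1 / (4 * L^2)) * (2 * F / (d + 2)) = F / (2 * (d + 2) * L^2)"
    proof -
      define D where "D = d + 2"
      have Dp: "D > 0" using dpos by (simp add: D_def)
      have "(1 / (4 * L^2)) * (2 * F / D) = F / (2 * D * L^2)"
        using Lpos Dp by (simp add: field_simps power2_eq_square)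
      then show ?thesis unfolding D_def .
    qed
    have "(4 * K * l^2) / (2 * (d + 2) * L^2) \<le> F / (2 * (d + 2) * L^2)"
      using kk Lpos dpos by (intro divide_right_mono) auto
    then have "K - (1 / (4 * L^2)) * (2 * F / (d + 2)) \<le> K - 2 / ((d + 2) * (L / l)^2) * K"
      unfolding e1 e2 by simp
    also have "\<dots> = (1 - 2 / ((d + 2) * (L / l)^2)) * K" by (simp add: algebra_simps)
    finally show ?thesis unfolding Ig cn d_def .
  qed
  have "enn2ereal (\<integral>\<^sup>+ R. e2ennreal (INF q\<in>prod_densities.
              KL_dens q (gauss_density (R ** Sigma ** transpose R))) \<partial>M) \<le> enn2ereal (ennreal (integral\<^sup>L M g))"
    using step1 step2 by (simp add: less_eq_ennreal.rep_eq[symmetric])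
  also have "\<dots> = ereal (integral\<^sup>L M g)" using Ig0 by simp
  also have "\<dots> \<le> ereal ((1 - 2 / ((real CARD('n) + 2) * (cond_number Sigma)\<^sup>2)) * K)"
    using final by simp
  also have "\<dots> = ereal (1 - 2 / ((real CARD('n) + 2) * (cond_number Sigma)\<^sup>2)) * ereal K" by simp
  finally show ?thesis unfolding RHS .
qed


end
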